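(* Let $d\ge 2$ be an integer and let $t \in \left[-\frac{1}{d^2-1}, \frac{1}{d+1}\right] \setminus \{0\}$. Suppose that there exist real weights $w_1,\dots,w_{d^2} \ge 0$ with $\sum_{i=1}^{d^2} w_i = 1$ and unit vectors $|x_1\rangle,\dots,|x_{d^2}\rangle$ and $|y_1\rangle,\dots,|y_{d^2}\rangle$ in $\mathbb{C}^d$ such that $$\sum_{i=1}^{d^2} w_i\, |x_i\rangle\langle x_i| \otimes |y_i\rangle\langle y_i| = \frac{t}{d}U_{SW} + \frac{1-t}{d^2} I_{d^2}$$ (equivalently $=\frac{2t}{d}\Pi_{sym} + \frac{1-t(d+1)}{d^2}I_{d^2}$). Then $w_i = \frac{1}{d^2}$ for all $i$, the frames $\{|x_i\rangle\}_{i=1}^{d^2}$ and $\{|y_i\rangle\}_{i=1}^{d^2}$ are tight and informationally complete, and, after a suitable choice of phases of the vectors $|x_i\rangle$, $|y_i\rangle$, for all $i \neq j$: $$|\langle x_i|y_j\rangle|^2 = \frac{1-t}{d},\qquad \langle x_i|y_i\rangle = \sqrt{\frac{t(d^2-1)+1}{d}},\qquad \langle x_j|x_i\rangle\langle y_i|y_j\rangle = t.$$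
   Context: $U_{SW}$ is the swap operator on $\mathbb{C}^d\otimes\mathbb{C}^d$, $U_{SW}(|u\rangle\otimes|v\rangle)=|v\rangle\otimes|u\rangle$; $\Pi_{sym}=\frac12(I_{d^2}+U_{SW})$. A set of unit vectors $\{|x_i\rangle\}_{i=1}^n\subset\mathbb{C}^d$ is a tight frame if $\sum_i |x_i\rangle\langle x_i| = cI_d$ for some real $c\ge 0$ (necessarily $c=n/d$). It is informationally complete if the projectors $|x_i\rangle\langle x_i|$ span the space of all complex $d\times d$ matrices. (The left-hand side of the hypothesis is a decomposition showing that the partial transpose of the isotropic state has length of separability $d^2$.) *)

theory Defs
  imports "HOL-Analysis.Analysis"
begin

text \<open>Vectors in C^d are elements of complex^('n::finite) with d = CARD('n);
operators on C^d are matrices complex^('n::finite)^'n; operators on C^d (x) C^d are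
matrices indexed by 'n * 'n.\<close>

definition braket :: "complex^('n::finite) \<Rightarrow> complex^('n::finite) \<Rightarrow> complex" where
  "braket x y = (\<Sum>k\<in>UNIV. cnj (x$k) * y$k)"

definition outer :: "complex^('n::finite) \<Rightarrow> complex^('n::finite)^'n" where
  "outer x = (\<chi> a b. x$a * cnj (x$b))"

definition kron :: "complex^('n::finite)^'n \<Rightarrow> complex^('n::finite)^'n \<Rightarrow> complex^('n::finite \<times> 'n)^('n \<times> 'n)" where
  "kron A B = (\<chi> p q. A$(fst p)$(fst q) * B$(snd p)$(snd q))"

text \<open>The swap operator: U_SW (e_a (x) e_b) = e_b (x) e_a.\<close>
definition swap_op :: "complex^('n::finite \<times> 'n)^('n \<times> 'n)" where
  "swap_op = (\<chi> p q. if fst p = snd q \<and> snd p = fst q then 1 else 0)"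

definition tight_frame :: "nat \<Rightarrow> (nat \<Rightarrow> complex^('n::finite)) \<Rightarrow> bool" where
  "tight_frame n x \<longleftrightarrow> (\<exists>c::real. c \<ge> 0 \<and> (\<Sum>i<n. outer (x i)) = c *\<^sub>R mat 1)"

definition inf_complete :: "nat \<Rightarrow> (nat \<Rightarrow> complex^('n::finite)) \<Rightarrow> bool" where
  "inf_complete n x \<longleftrightarrow>
     (\<forall>M :: complex^('n::finite)^'n. \<exists>c :: nat \<Rightarrow> complex. M = (\<Sum>i<n. (\<chi> a b. c i * (outer (x i))$a$b)))"

end

theory Submission
  imports Defs
begin

lemma cnj_self: "cnj z * z = complex_of_real (cmod z ^ 2)"
  by (metis complex_norm_square mult.commute)

lemma axis_comp: "(axis a (1::complex) :: complex^'n::finite) $ k = (if k = a then 1 else 0)"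
  by (simp add: axis_def)

lemma br_axis_left: "braket (axis a 1) y = y$a"
proof -
  have "braket (axis a 1) y = (\<Sum>k\<in>UNIV. if k = a then y$k else 0)"
    unfolding braket_def by (rule sum.cong) (auto simp: axis_comp)
  then show ?thesis by simp
qed

lemma br_axis_right: "braket x (axis a 1) = cnj (x$a)"
proof -
  have "braket x (axis a 1) = (\<Sum>k\<in>UNIV. if k = a then cnj (x$k) else 0)"
    unfolding braket_def by (rule sum.cong) (auto simp: axis_comp)
  then show ?thesis by simp
qed

lemma br_scale: "braket (c *s x) (c' *s y) = cnj c * c' * braket x y"
  unfolding braket_def by (simp add: sum_distrib_left mult_ac)

lemma br_cnj: "cnj (braket x y) = braket y x"
  unfolding braket_def by (simp add: mult.commute)

lemma br_self: "braket x x = complex_of_real (norm x ^ 2)"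
proof -
  have "norm x ^ 2 = (\<Sum>k\<in>UNIV. cmod (x$k) ^ 2)"
    by (simp add: norm_vec_def L2_set_def sum_nonneg)
  moreover have "braket x x = (\<Sum>k\<in>UNIV. complex_of_real (cmod (x$k) ^ 2))"
    unfolding braket_def by (rule sum.cong) (auto simp: cnj_self simp del: of_real_power)
  ultimately show ?thesis by simp
qed

lemma br_expand: "braket u v = (\<Sum>e\<in>UNIV. braket u (axis e 1) * braket (axis e 1) v)"
  unfolding br_axis_left br_axis_right by (simp add: braket_def mult.commute)

lemma prod4_expand:
  fixes p q r s :: "complex^'n::finite"
  shows "braket p X * braket X r * braket q Y * braket Y s =
    (\<Sum>e\<in>UNIV. \<Sum>b\<in>UNIV. \<Sum>c\<in>UNIV. \<Sum>a\<in>UNIV.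
      (cnj (p$a) * r$c * cnj (q$b) * s$e) * (X$a * cnj (X$c) * Y$b * cnj (Y$e)))"
  unfolding braket_def sum_distrib_left sum_distrib_right
  by (intro sum.cong refl) (simp add: mult_ac)

lemma sum5_swap:
  "(\<Sum>i\<in>I. \<Sum>e\<in>E. \<Sum>b\<in>B. \<Sum>c\<in>C. \<Sum>a\<in>A. f i e b c a) =
   (\<Sum>e\<in>E. \<Sum>b\<in>B. \<Sum>c\<in>C. \<Sum>a\<in>A. \<Sum>i\<in>I. f i e b c a)"
  apply (subst sum.swap, rule sum.cong[OF refl])
  apply (subst sum.swap, rule sum.cong[OF refl])
  apply (subst sum.swap, rule sum.cong[OF refl])
  apply (subst sum.swap, rule refl)
  done

lemma sum_mult_ind:
  fixes f :: "'n::finite \<Rightarrow> complex"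
  shows "(\<Sum>a\<in>UNIV. f a * (if a = e then 1 else 0)) = f e"
proof -
  have "(\<Sum>a\<in>UNIV. f a * (if a = e then 1 else 0)) = (\<Sum>a\<in>UNIV. if a = e then f a else 0)"
    by (rule sum.cong) auto
  then show ?thesis by simp
qed

lemma sum_cond_collapse:
  fixes K :: "'n::finite \<Rightarrow> 'n \<Rightarrow> 'n \<Rightarrow> 'n \<Rightarrow> complex"
  shows "(\<Sum>e\<in>UNIV. \<Sum>b\<in>UNIV. \<Sum>c\<in>UNIV. \<Sum>a\<in>UNIV. K e b c a * (A * (if a = e \<and> b = c then 1 else 0) + B * (if a = c \<and> b = e then 1 else 0)))
     = A * (\<Sum>e\<in>UNIV. \<Sum>b\<in>UNIV. K e b b e) + B * (\<Sum>e\<in>UNIV. \<Sum>c\<in>UNIV. K e e c c)"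
proof -
  have 1: "(\<Sum>a\<in>UNIV. K e b c a * (if a = e \<and> b = c then 1 else 0)) = (if b = c then K e b c e else 0)" for e b c
  proof (cases "b = c")
    case True then show ?thesis using sum_mult_ind[of "K e b c" e] by simp
  qed simp
  have 2: "(\<Sum>a\<in>UNIV. K e b c a * (if a = c \<and> b = e then 1 else 0)) = (if b = e then K e b c c else 0)" for e b c
  proof (cases "b = e")
    case True then show ?thesis using sum_mult_ind[of "K e b c" c] by simp
  qed simp
  have "\<And>e b c. (\<Sum>a\<in>UNIV. K e b c a * (A * (if a = e \<and> b = c then 1 else 0) + B * (if a = c \<and> b = e then 1 else 0)))
      = A * (if b = c then K e b c e else 0) + B * (if b = e then K e b c c else 0)"
  proof -
    fix e b c
    have "(\<Sum>a\<in>UNIV. K e b c a * (A * (if a = e \<and> b = c then 1 else 0) + B * (if a = c \<and> b = e then 1 else 0)))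
      = A * (\<Sum>a\<in>UNIV. K e b c a * (if a = e \<and> b = c then 1 else 0)) + B * (\<Sum>a\<in>UNIV. K e b c a * (if a = c \<and> b = e then 1 else 0))"
      by (simp add: distrib_left sum.distrib sum_distrib_left mult_ac)
    then show "(\<Sum>a\<in>UNIV. K e b c a * (A * (if a = e \<and> b = c then 1 else 0) + B * (if a = c \<and> b = e then 1 else 0)))
      = A * (if b = c then K e b c e else 0) + B * (if b = e then K e b c c else 0)"
      by (simp only: 1 2)
  qed
  then have "(\<Sum>e\<in>UNIV. \<Sum>b\<in>UNIV. \<Sum>c\<in>UNIV. \<Sum>a\<in>UNIV. K e b c a * (A * (if a = e \<and> b = c then 1 else 0) + B * (if a = c \<and> b = e then 1 else 0)))
     = (\<Sum>e\<in>UNIV. \<Sum>b\<in>UNIV. \<Sum>c\<in>UNIV. A * (if b = c then K e b c e else 0) + B * (if b = e then K e b c c else 0))"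
    by simp
  also have "... = (\<Sum>e\<in>UNIV. \<Sum>b\<in>UNIV. A * K e b b e + B * (if b = e then (\<Sum>c\<in>UNIV. K e b c c) else 0))"
  proof (intro sum.cong refl)
    fix e b
    show "(\<Sum>c\<in>UNIV. A * (if b = c then K e b c e else 0) + B * (if b = e then K e b c c else 0)) = A * K e b b e + B * (if b = e then (\<Sum>c\<in>UNIV. K e b c c) else 0)"
      by (cases "b = e") (simp_all only: sum.distrib sum_distrib_left[symmetric], simp_all)
  qed
  also have "... = (\<Sum>e\<in>UNIV. A * (\<Sum>b\<in>UNIV. K e b b e) + B * (\<Sum>c\<in>UNIV. K e e c c))"
  proof (rule sum.cong[OF refl])
    fix e
    have "(\<Sum>b\<in>UNIV. (if b = e then (\<Sum>c\<in>UNIV. K e b c c) else 0)) = (\<Sum>c\<in>UNIV. K e e c c)"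
      by simp
    then show "(\<Sum>b\<in>UNIV. A * K e b b e + B * (if b = e then (\<Sum>c\<in>UNIV. K e b c c) else 0)) = A * (\<Sum>b\<in>UNIV. K e b b e) + B * (\<Sum>c\<in>UNIV. K e e c c)"
      by (simp only: sum.distrib sum_distrib_left[symmetric])
  qed
  also have "... = A * (\<Sum>e\<in>UNIV. \<Sum>b\<in>UNIV. K e b b e) + B * (\<Sum>e\<in>UNIV. \<Sum>c\<in>UNIV. K e e c c)"
    by (simp only: sum.distrib sum_distrib_left[symmetric])
  finally show ?thesis .
qed

lemma star:
  fixes x y :: "nat \<Rightarrow> complex^'n::finite" and W :: "nat \<Rightarrow> complex"
  assumes E: "\<And>a b c e. (\<Sum>i<n. W i * (x i$a * cnj (x i$c) * y i$b * cnj (y i$e))) = A * (if a = e \<and> b = c then 1 else 0) + B * (if a = c \<and> b = e then 1 else 0)"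
  shows "(\<Sum>i<n. W i * (braket p (x i) * braket (x i) r * braket q (y i) * braket (y i) s)) = A * braket p s * braket q r + B * braket p r * braket q s"
proof -
  have "(\<Sum>i<n. W i * (braket p (x i) * braket (x i) r * braket q (y i) * braket (y i) s))
    = (\<Sum>i<n. \<Sum>e\<in>UNIV. \<Sum>b\<in>UNIV. \<Sum>c\<in>UNIV. \<Sum>a\<in>UNIV.
      (cnj (p$a) * r$c * cnj (q$b) * s$e) * (W i * (x i$a * cnj (x i$c) * y i$b * cnj (y i$e))))"
    unfolding prod4_expand by (simp add: sum_distrib_left mult_ac)
  also have "... = (\<Sum>e\<in>UNIV. \<Sum>b\<in>UNIV. \<Sum>c\<in>UNIV. \<Sum>a\<in>UNIV. \<Sum>i<n.
      (cnj (p$a) * r$c * cnj (q$b) * s$e) * (W i * (x i$a * cnj (x i$c) * y i$b * cnj (y i$e))))"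
    by (rule sum5_swap)
  also have "... = (\<Sum>e\<in>UNIV. \<Sum>b\<in>UNIV. \<Sum>c\<in>UNIV. \<Sum>a\<in>UNIV.
      (cnj (p$a) * r$c * cnj (q$b) * s$e) * (A * (if a = e \<and> b = c then 1 else 0) + B * (if a = c \<and> b = e then 1 else 0)))"
    by (simp only: sum_distrib_left[symmetric] E)
  also have "... = A * (\<Sum>e\<in>UNIV. \<Sum>b\<in>UNIV. cnj (p$e) * r$b * cnj (q$b) * s$e) + B * (\<Sum>e\<in>UNIV. \<Sum>c\<in>UNIV. cnj (p$c) * r$c * cnj (q$e) * s$e)"
    by (rule sum_cond_collapse)
  also have "... = A * braket p s * braket q r + B * braket p r * braket q s"
  proof -
    have "(\<Sum>e\<in>UNIV. \<Sum>b\<in>UNIV. cnj (p$e) * r$b * cnj (q$b) * s$e) = braket p s * braket q r"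
      unfolding braket_def sum_product by (simp add: mult_ac)
    moreover have "(\<Sum>e\<in>UNIV. \<Sum>c\<in>UNIV. cnj (p$c) * r$c * cnj (q$e) * s$e) = braket p r * braket q s"
      unfolding braket_def sum_product by (subst sum.swap) (simp add: mult_ac)
    ultimately show ?thesis by (simp add: mult_ac)
  qed
  finally show ?thesis .
qed

lemma entry_eq:
  fixes x y :: "nat \<Rightarrow> complex^'n::finite"
  assumes decomp: "(\<Sum>i<n. w i *\<^sub>R kron (outer (x i)) (outer (y i))) = A *\<^sub>R swap_op + B *\<^sub>R mat 1"
  shows "(\<Sum>i<n. complex_of_real (w i) * (x i$a * cnj (x i$c) * y i$b * cnj (y i$e)))
     = complex_of_real A * (if a = e \<and> b = c then 1 else 0) + complex_of_real B * (if a = c \<and> b = e then 1 else 0)"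
proof -
  have L: "(\<Sum>i<n. w i *\<^sub>R kron (outer (x i)) (outer (y i))) $ (a,b) $ (c,e) = (\<Sum>i<n. complex_of_real (w i) * (x i$a * cnj (x i$c) * y i$b * cnj (y i$e)))"
  proof -
    have "(\<Sum>i<n. w i *\<^sub>R kron (outer (x i)) (outer (y i))) $ (a,b) $ (c,e) = (\<Sum>i<n. (w i *\<^sub>R kron (outer (x i)) (outer (y i))) $ (a,b) $ (c,e))"
      by (simp only: sum_component)
    also have "... = (\<Sum>i<n. complex_of_real (w i) * (x i$a * cnj (x i$c) * y i$b * cnj (y i$e)))"
      by (intro sum.cong refl) (simp only: vector_scaleR_component, simp add: kron_def outer_def scaleR_conv_of_real)
    finally show ?thesis .
  qed
  have R: "(A *\<^sub>R swap_op + B *\<^sub>R mat 1 :: complex^('n\<times>'n)^('n\<times>'n)) $ (a,b) $ (c,e) = complex_of_real A * (if a = e \<and> b = c then 1 else 0) + complex_of_real B * (if a = c \<and> b = e then 1 else 0)"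
  proof -
    have 1: "(A *\<^sub>R swap_op + B *\<^sub>R mat 1 :: complex^('n\<times>'n)^('n\<times>'n)) $ (a,b) $ (c,e) = A *\<^sub>R ((swap_op :: complex^('n\<times>'n)^('n\<times>'n)) $ (a,b) $ (c,e)) + B *\<^sub>R ((mat 1 :: complex^('n\<times>'n)^('n\<times>'n)) $ (a,b) $ (c,e))"
      by simp
    have 2: "(swap_op :: complex^('n\<times>'n)^('n\<times>'n)) $ (a,b) $ (c,e) = (if a = e \<and> b = c then 1 else 0)"
      by (simp add: swap_op_def)
    have 3: "(mat 1 :: complex^('n\<times>'n)^('n\<times>'n)) $ (a,b) $ (c,e) = (if a = c \<and> b = e then 1 else 0)"
      by (simp add: mat_def)
    show ?thesis unfolding 1 2 3 by (simp add: scaleR_conv_of_real)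
  qed
  show ?thesis using L R decomp by simp
qed


lemma br_diff_left: "braket (u - v) z = braket u z - braket v z"
  unfolding braket_def by (simp add: sum_subtractf algebra_simps)

lemma br_diff_right: "braket z (u - v) = braket z u - braket z v"
  unfolding braket_def by (simp add: sum_subtractf algebra_simps)

lemma br_smult_left: "braket (c *s u) z = cnj c * braket u z"
  unfolding braket_def by (simp add: sum_distrib_left mult_ac)

lemma br_smult_right: "braket z (c *s u) = c * braket z u"
  unfolding braket_def by (simp add: sum_distrib_left mult_ac)

lemma br_zero_imp: "braket z z = 0 \<Longrightarrow> z = 0"
  using br_self[of z] by simp

lemma cs_equal:
  fixes u v :: "complex^'n::finite"
  assumes "norm u = 1" "norm v = 1" "cmod (braket u v) = 1"
  shows "v = braket u v *s u"
proof -
  let ?c = "braket u v"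
  have uu: "braket u u = 1" using br_self[of u] assms by simp
  have vv: "braket v v = 1" using br_self[of v] assms by simp
  have cc: "cnj ?c * ?c = 1" using cnj_self[of ?c] assms by simp
  have "braket (v - ?c *s u) (v - ?c *s u) = braket v v - ?c * braket v u - (cnj ?c * braket u v - cnj ?c * (?c * braket u u))"
    unfolding br_diff_left br_diff_right br_smult_left br_smult_right by (simp add: algebra_simps)
  also have "... = 1 - ?c * cnj ?c - (cnj ?c * ?c - cnj ?c * ?c)"
    unfolding uu vv br_cnj[of u v, symmetric] by simp
  also have "... = 0"
    using cc by (simp add: mult.commute)
  finally have "v - ?c *s u = 0" by (rule br_zero_imp)
  then show ?thesis by simp
qed

lemma cs_block:
  fixes w q :: "nat \<Rightarrow> real" and h :: "nat \<Rightarrow> nat \<Rightarrow> complex" and D :: real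
  assumes w: "\<forall>i<n. w i \<ge> 0" and D: "D \<ge> 0"
    and hq: "\<forall>i<n. h i i = complex_of_real (q i)"
    and hs: "\<forall>i<n. (\<Sum>k<n. w k * cmod (h i k) ^ 2) = D * q i"
    and qs: "(\<Sum>i<n. w i * q i) = real n * D"
  shows "\<forall>i<n. w i * q i = D" and "D > 0 \<Longrightarrow> \<forall>i<n. \<forall>k<n. k \<noteq> i \<longrightarrow> h i k = 0"
proof -
  have split: "(\<Sum>k<n. w k * cmod (h i k) ^ 2) = w i * q i ^ 2 + (\<Sum>k\<in>{..<n}-{i}. w k * cmod (h i k) ^ 2)"
    if "i < n" for i
  proof -
    have "(\<Sum>k<n. w k * cmod (h i k) ^ 2) = w i * cmod (h i i) ^ 2 + (\<Sum>k\<in>{..<n}-{i}. w k * cmod (h i k) ^ 2)"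
      using that by (subst sum.remove[of _ i]) auto
    then show ?thesis using hq that by simp
  qed
  have rest_nn: "(\<Sum>k\<in>{..<n}-{i}. w k * cmod (h i k) ^ 2) \<ge> 0" for i
    using w by (intro sum_nonneg) auto
  have le: "w i * q i ^ 2 \<le> D * q i" if "i < n" for i
  proof -
    have "(\<Sum>k<n. w k * cmod (h i k) ^ 2) = D * q i" using hs that by simp
    then show ?thesis using split[OF that] rest_nn[of i] by linarith
  qed
  have eqD: "\<forall>i<n. w i * q i = D"
  proof (cases "D = 0")
    case True
    show ?thesis
    proof (intro allI impI)
      fix i assume i: "i < n"
      have "w i * q i ^ 2 \<le> 0" using le[OF i] True by simp
      moreover have "w i * q i ^ 2 \<ge> 0" using w i by simp
      ultimately have "w i * q i ^ 2 = 0" by linarith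
      then show "w i * q i = D" using True by (simp add: power2_eq_square)
    qed
  next
    case False
    then have Dp: "D > 0" using D by simp
    have qnn: "q i \<ge> 0" if "i < n" for i
    proof -
      have "(\<Sum>k<n. w k * cmod (h i k) ^ 2) \<ge> 0" using w by (intro sum_nonneg) auto
      moreover have "(\<Sum>k<n. w k * cmod (h i k) ^ 2) = D * q i" using hs that by simp
      ultimately have "D * q i \<ge> 0" by simp
      then show ?thesis using Dp by (simp add: zero_le_mult_iff)
    qed
    have le2: "w i * q i \<le> D" if "i < n" for i
    proof (cases "q i = 0")
      case True then show ?thesis using D by simp
    next
      case False
      then have "q i > 0" using qnn[OF that] by simp
      moreover have "(w i * q i) * q i \<le> D * q i" using le[OF that] by (simp add: power2_eq_square mult_ac)
      ultimately show ?thesis by simp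
    qed
    have "(\<Sum>i<n. D - w i * q i) = 0"
      using qs by (simp add: sum_subtractf)
    moreover have "\<forall>i\<in>{..<n}. D - w i * q i \<ge> 0" using le2 by simp
    ultimately have "\<forall>i\<in>{..<n}. D - w i * q i = 0"
      using sum_nonneg_eq_0_iff[of "{..<n}" "\<lambda>i. D - w i * q i"] by simp
    then show ?thesis by simp
  qed
  then show "\<forall>i<n. w i * q i = D" .
  assume Dp: "D > 0"
  show "\<forall>i<n. \<forall>k<n. k \<noteq> i \<longrightarrow> h i k = 0"
  proof (intro allI impI)
    fix i k assume i: "i < n" and k: "k < n" and ki: "k \<noteq> i"
    have "w i * q i ^ 2 = D * q i" using eqD i by (simp add: power2_eq_square mult_ac)
    then have "(\<Sum>k\<in>{..<n}-{i}. w k * cmod (h i k) ^ 2) = 0"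
      using split[OF i] hs i by simp
    then have "\<forall>k\<in>{..<n}-{i}. w k * cmod (h i k) ^ 2 = 0"
      using sum_nonneg_eq_0_iff[of "{..<n}-{i}" "\<lambda>k. w k * cmod (h i k) ^ 2"] w by simp
    then have "w k * cmod (h i k) ^ 2 = 0" using k ki by simp
    moreover have "w k > 0"
    proof -
      have "w k * q k = D" using eqD k by simp
      then have "w k \<noteq> 0" using Dp by auto
      moreover have "w k \<ge> 0" using w k by simp
      ultimately show ?thesis by linarith
    qed
    ultimately show "h i k = 0" by simp
  qed
qed

locale thm_setup =
  fixes t :: real and w :: "nat \<Rightarrow> real" and x y :: "nat \<Rightarrow> complex^'n::finite"
    and d n :: nat and aa bb :: real
  assumes d_def: "d = CARD('n)" and n_def: "n = d^2" and d2: "d \<ge> 2"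
    and t_lo: "- 1 / (real d ^ 2 - 1) \<le> t" and t_hi: "t \<le> 1 / (real d + 1)" and t0: "t \<noteq> 0"
    and w_nonneg: "\<forall>i<n. w i \<ge> 0" and w_sum: "(\<Sum>i<n. w i) = 1"
    and x_unit: "\<forall>i<n. norm (x i) = 1" and y_unit: "\<forall>i<n. norm (y i) = 1"
    and aa_def: "aa = t / real d" and bb_def: "bb = (1 - t) / real d ^ 2"
    and decomp: "(\<Sum>i<n. w i *\<^sub>R kron (outer (x i)) (outer (y i)))
                 = (t / real d) *\<^sub>R swap_op + ((1 - t) / real d ^ 2) *\<^sub>R mat 1"
begin

abbreviation W :: "nat \<Rightarrow> complex" where "W i \<equiv> complex_of_real (w i)"

lemma E: "(\<Sum>i<n. W i * (x i$a * cnj (x i$c) * y i$b * cnj (y i$e)))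
     = complex_of_real aa * (if a = e \<and> b = c then 1 else 0) + complex_of_real bb * (if a = c \<and> b = e then 1 else 0)"
  using entry_eq[OF decomp] aa_def bb_def by simp

lemma ST: "(\<Sum>i<n. W i * (braket p (x i) * braket (x i) r * braket q (y i) * braket (y i) s))
   = complex_of_real aa * braket p s * braket q r + complex_of_real bb * braket p r * braket q s"
  by (rule star) (rule E)

lemma card_d: "card (UNIV :: 'n set) = d" using d_def by simp

lemma xx: "i < n \<Longrightarrow> braket (x i) (x i) = 1" using br_self[of "x i"] x_unit by simp
lemma yy: "i < n \<Longrightarrow> braket (y i) (y i) = 1" using br_self[of "y i"] y_unit by simp

lemma br_ax: "braket (axis e 1) (axis f 1 :: complex^'n) = (if e = f then 1 else 0)"
  by (simp add: br_axis_left axis_comp eq_commute)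

lemma swapW: "(\<Sum>k<n. W k * (\<Sum>e\<in>UNIV. F e k)) = (\<Sum>e\<in>UNIV. \<Sum>k<n. W k * F e k)"
  unfolding sum_distrib_left by (rule sum.swap)

lemma swapW2: "(\<Sum>k<n. W k * (\<Sum>e\<in>UNIV. \<Sum>f\<in>UNIV. F e f k)) = (\<Sum>e\<in>UNIV. \<Sum>f\<in>UNIV. \<Sum>k<n. W k * F e f k)"
  by (simp only: swapW)

lemma aa_bb: "complex_of_real aa * of_nat d + complex_of_real bb * of_nat d ^ 2 = 1"
proof -
  have "aa * d + bb * d^2 = 1" using d2 by (simp add: aa_def bb_def field_simps)
  then have "complex_of_real (aa * d + bb * d^2) = 1" by simp
  then show ?thesis by simp
qed

lemma T: "(\<Sum>k<n. W k * (braket (x k) (y k) * braket (y k) (x k))) = complex_of_real aa * of_nat d ^ 2 + complex_of_real bb * of_nat d"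
proof -
  have 1: "braket (x k) (y k) * braket (y k) (x k) = (\<Sum>e\<in>UNIV. \<Sum>f\<in>UNIV. braket (axis e 1) (x k) * braket (x k) (axis f 1) * braket (axis f 1) (y k) * braket (y k) (axis e 1))" for k
    unfolding br_axis_left br_axis_right unfolding braket_def sum_product
    by (subst sum.swap) (simp add: mult_ac)
  have "(\<Sum>k<n. W k * (braket (x k) (y k) * braket (y k) (x k))) = (\<Sum>e\<in>UNIV. \<Sum>f\<in>UNIV. \<Sum>k<n. W k * (braket (axis e 1) (x k) * braket (x k) (axis f 1) * braket (axis f 1) (y k) * braket (y k) (axis e 1)))"
    unfolding 1 by (rule swapW2)
  also have "... = (\<Sum>e\<in>(UNIV::'n set). \<Sum>f\<in>UNIV. complex_of_real aa + (if e = f then complex_of_real bb else 0))"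
  proof -
    have l: "complex_of_real aa * (if e = e then 1 else 0) * (if f = f then 1 else 0) + complex_of_real bb * (if e = f then 1 else 0) * (if f = e then 1 else 0)
       = complex_of_real aa + (if e = f then complex_of_real bb else 0)" for e f :: 'n
      by auto
    show ?thesis unfolding ST br_ax l ..
  qed
  also have "... = (\<Sum>e\<in>(UNIV::'n set). of_nat d * complex_of_real aa + complex_of_real bb)"
    by (intro sum.cong refl) (simp add: sum.distrib card_d)
  also have "... = complex_of_real aa * of_nat d ^ 2 + complex_of_real bb * of_nat d"
    by (simp add: sum.distrib card_d power2_eq_square algebra_simps)
  finally show ?thesis .
qed


lemma STc:
  assumes "\<And>k. F k = braket p (x k) * braket (x k) r * braket q (y k) * braket (y k) s"
  shows "(\<Sum>k<n. W k * F k) = complex_of_real aa * braket p s * braket q r + complex_of_real bb * braket p r * braket q s"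
  using ST[of p r q s] assms by simp

lemma HH: assumes i: "i < n"
  shows "(\<Sum>k<n. W k * ((braket (x k) (x i) * braket (y k) (y i)) * cnj (braket (x k) (x i) * braket (y k) (y i))))
    = complex_of_real aa * (braket (x i) (y i) * cnj (braket (x i) (y i))) + complex_of_real bb"
  by (subst STc[of _ "x i" "x i" "y i" "y i"]) (simp_all add: br_cnj mult_ac xx[OF i] yy[OF i])

lemma AA: assumes i: "i < n"
  shows "(\<Sum>k<n. W k * ((braket (x k) (y i) * braket (y k) (x i)) * cnj (braket (x k) (y i) * braket (y k) (x i))))
    = complex_of_real aa * (braket (x i) (y i) * cnj (braket (x i) (y i))) + complex_of_real bb"
  by (subst STc[of _ "y i" "y i" "x i" "x i"]) (simp_all add: br_cnj mult_ac xx[OF i] yy[OF i])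

lemma HA: assumes i: "i < n"
  shows "(\<Sum>k<n. W k * ((braket (x k) (x i) * braket (y k) (y i)) * cnj (braket (x k) (y i) * braket (y k) (x i))))
    = complex_of_real aa + complex_of_real bb * (braket (x i) (y i) * cnj (braket (x i) (y i)))"
  by (subst STc[of _ "y i" "x i" "x i" "y i"]) (simp_all add: br_cnj mult_ac xx[OF i] yy[OF i])

lemma AH: assumes i: "i < n"
  shows "(\<Sum>k<n. W k * ((braket (x k) (y i) * braket (y k) (x i)) * cnj (braket (x k) (x i) * braket (y k) (y i))))
    = complex_of_real aa + complex_of_real bb * (braket (x i) (y i) * cnj (braket (x i) (y i)))"
  by (subst STc[of _ "x i" "y i" "y i" "x i"]) (simp_all add: br_cnj mult_ac xx[OF i] yy[OF i])

lemma GG: assumes i: "i < n"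
  shows "(\<Sum>k<n. W k * ((braket (x k) (x i) * braket (y i) (y k)) * cnj (braket (x k) (x i) * braket (y i) (y k))))
    = complex_of_real aa * (braket (x i) (y i) * cnj (braket (x i) (y i))) + complex_of_real bb"
  by (subst STc[of _ "x i" "x i" "y i" "y i"]) (simp_all add: br_cnj mult_ac xx[OF i] yy[OF i])

lemma GGprod: assumes i: "i < n" and k: "k < n"
  shows "(\<Sum>l<n. W l * ((braket (x k) (x l) * braket (y l) (y k)) * (braket (x l) (x i) * braket (y i) (y l))))
    = complex_of_real aa * (braket (x k) (y k) * cnj (braket (x i) (y i))) + complex_of_real bb * (braket (x k) (x i) * braket (y i) (y k))"
  by (subst STc[of _ "x k" "x i" "y i" "y k"]) (simp_all add: br_cnj mult_ac)


lemma sum_br_ax: "(\<Sum>e\<in>UNIV. braket u (axis e 1) * braket (axis e 1) v) = braket u (v::complex^'n)"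
  by (rule br_expand[symmetric])

lemma one_y: "i < n \<Longrightarrow> (\<Sum>e\<in>UNIV. braket (axis e 1) (y i) * braket (y i) (axis e 1)) = 1"
  using sum_br_ax[of "y i" "y i"] yy[of i] by (simp add: mult.commute)

lemma one_x: "i < n \<Longrightarrow> (\<Sum>e\<in>UNIV. braket (axis e 1) (x i) * braket (x i) (axis e 1)) = 1"
  using sum_br_ax[of "x i" "x i"] xx[of i] by (simp add: mult.commute)

lemma sum_ax_const: "(\<Sum>e\<in>(UNIV::'n set). braket (axis e 1) (axis e 1 :: complex^'n)) = of_nat d"
  by (simp add: br_ax card_d)

lemma GC: assumes i: "i < n"
  shows "(\<Sum>k<n. W k * ((braket (x k) (x i) * braket (y i) (y k)) * cnj (braket (x k) (y k))))
    = (complex_of_real aa * of_nat d + complex_of_real bb) * cnj (braket (x i) (y i))"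
proof -
  have 1: "(braket (x k) (x i) * braket (y i) (y k)) * cnj (braket (x k) (y k)) =
     (\<Sum>e\<in>UNIV. braket (axis e 1) (x k) * braket (x k) (x i) * braket (y i) (y k) * braket (y k) (axis e 1))" for k
    unfolding br_cnj by (subst br_expand[of "y k" "x k"]) (simp add: sum_distrib_left mult_ac)
  have "(\<Sum>k<n. W k * ((braket (x k) (x i) * braket (y i) (y k)) * cnj (braket (x k) (y k))))
     = (\<Sum>e\<in>UNIV. \<Sum>k<n. W k * (braket (axis e 1) (x k) * braket (x k) (x i) * braket (y i) (y k) * braket (y k) (axis e 1)))"
    unfolding 1 by (rule swapW)
  also have "... = (\<Sum>e\<in>UNIV. complex_of_real aa * braket (axis e 1) (axis e 1 :: complex^'n) * braket (y i) (x i)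
        + complex_of_real bb * (braket (y i) (axis e 1) * braket (axis e 1) (x i)))"
    unfolding ST by (simp add: mult_ac)
  also have "... = (complex_of_real aa * of_nat d + complex_of_real bb) * braket (y i) (x i)"
    unfolding sum.distrib sum_distrib_left[symmetric] sum_distrib_right[symmetric] sum_br_ax sum_ax_const
    by (simp add: algebra_simps)
  finally show ?thesis by (simp add: br_cnj)
qed

lemma CG: assumes i: "i < n"
  shows "(\<Sum>k<n. W k * (cnj (braket (x k) (x i) * braket (y i) (y k)) * braket (x k) (y k)))
    = (complex_of_real aa * of_nat d + complex_of_real bb) * braket (x i) (y i)"
proof -
  have "cnj (\<Sum>k<n. W k * ((braket (x k) (x i) * braket (y i) (y k)) * cnj (braket (x k) (y k))))
     = cnj ((complex_of_real aa * of_nat d + complex_of_real bb) * cnj (braket (x i) (y i)))"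
    using GC[OF i] by simp
  then show ?thesis by (simp add: mult_ac)
qed

lemma Row: assumes i: "i < n"
  shows "(\<Sum>k<n. W k * (braket (x k) (y i) * cnj (braket (x k) (y i)))) = complex_of_real aa + complex_of_real bb * of_nat d"
proof -
  have 1: "W k * (braket (x k) (y i) * cnj (braket (x k) (y i))) =
     (\<Sum>e\<in>UNIV. W k * (braket (y i) (x k) * braket (x k) (y i) * braket (axis e 1) (y k) * braket (y k) (axis e 1)))" if k: "k < n" for k
  proof -
    have "W k * (braket (x k) (y i) * cnj (braket (x k) (y i))) = W k * (braket (y i) (x k) * braket (x k) (y i)) * (\<Sum>e\<in>UNIV. braket (axis e 1) (y k) * braket (y k) (axis e 1))"
      using one_y[OF k] by (simp add: br_cnj mult_ac)
    then show ?thesis by (simp add: sum_distrib_left mult_ac)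
  qed
  have "(\<Sum>k<n. W k * (braket (x k) (y i) * cnj (braket (x k) (y i))))
     = (\<Sum>k<n. \<Sum>e\<in>UNIV. W k * (braket (y i) (x k) * braket (x k) (y i) * braket (axis e 1) (y k) * braket (y k) (axis e 1)))"
    using 1 by (intro sum.cong refl) simp
  also have "... = (\<Sum>e\<in>UNIV. \<Sum>k<n. W k * (braket (y i) (x k) * braket (x k) (y i) * braket (axis e 1) (y k) * braket (y k) (axis e 1)))"
    by (rule sum.swap)
  also have "... = (\<Sum>e\<in>UNIV. complex_of_real aa * (braket (y i) (axis e 1) * braket (axis e 1) (y i))
        + complex_of_real bb * braket (axis e 1) (axis e 1 :: complex^'n))"
    unfolding ST by (simp add: yy[OF i] mult_ac)
  also have "... = complex_of_real aa + complex_of_real bb * of_nat d"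
    unfolding sum.distrib sum_distrib_left[symmetric] sum_br_ax sum_ax_const yy[OF i] by simp
  finally show ?thesis .
qed

lemma Col: assumes i: "i < n"
  shows "(\<Sum>k<n. W k * (braket (x i) (y k) * cnj (braket (x i) (y k)))) = complex_of_real aa + complex_of_real bb * of_nat d"
proof -
  have 1: "W k * (braket (x i) (y k) * cnj (braket (x i) (y k))) =
     (\<Sum>e\<in>UNIV. W k * (braket (axis e 1) (x k) * braket (x k) (axis e 1) * braket (x i) (y k) * braket (y k) (x i)))" if k: "k < n" for k
  proof -
    have "W k * (braket (x i) (y k) * cnj (braket (x i) (y k))) = W k * (braket (x i) (y k) * braket (y k) (x i)) * (\<Sum>e\<in>UNIV. braket (axis e 1) (x k) * braket (x k) (axis e 1))"
      using one_x[OF k] by (simp add: br_cnj mult_ac)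
    then show ?thesis by (simp add: sum_distrib_left mult_ac)
  qed
  have "(\<Sum>k<n. W k * (braket (x i) (y k) * cnj (braket (x i) (y k))))
     = (\<Sum>k<n. \<Sum>e\<in>UNIV. W k * (braket (axis e 1) (x k) * braket (x k) (axis e 1) * braket (x i) (y k) * braket (y k) (x i)))"
    using 1 by (intro sum.cong refl) simp
  also have "... = (\<Sum>e\<in>UNIV. \<Sum>k<n. W k * (braket (axis e 1) (x k) * braket (x k) (axis e 1) * braket (x i) (y k) * braket (y k) (x i)))"
    by (rule sum.swap)
  also have "... = (\<Sum>e\<in>UNIV. complex_of_real aa * (braket (x i) (axis e 1) * braket (axis e 1) (x i))
        + complex_of_real bb * braket (axis e 1) (axis e 1 :: complex^'n))"
    unfolding ST by (simp add: xx[OF i] mult_ac)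
  also have "... = complex_of_real aa + complex_of_real bb * of_nat d"
    unfolding sum.distrib sum_distrib_left[symmetric] sum_br_ax sum_ax_const xx[OF i] by simp
  finally show ?thesis .
qed

lemma FX: "(\<Sum>k<n. W k * (x k$a * cnj (x k$c))) = (if a = c then complex_of_real aa + complex_of_real bb * of_nat d else 0)"
proof -
  have 1: "W k * (x k$a * cnj (x k$c)) =
     (\<Sum>e\<in>UNIV. W k * (braket (axis a 1) (x k) * braket (x k) (axis c 1) * braket (axis e 1) (y k) * braket (y k) (axis e 1)))" if k: "k < n" for k
  proof -
    have "W k * (x k$a * cnj (x k$c)) = W k * (braket (axis a 1) (x k) * braket (x k) (axis c 1)) * (\<Sum>e\<in>UNIV. braket (axis e 1) (y k) * braket (y k) (axis e 1))"
      using one_y[OF k] by (simp add: br_axis_left br_axis_right)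
    then show ?thesis by (simp add: sum_distrib_left mult_ac)
  qed
  have "(\<Sum>k<n. W k * (x k$a * cnj (x k$c)))
     = (\<Sum>k<n. \<Sum>e\<in>UNIV. W k * (braket (axis a 1) (x k) * braket (x k) (axis c 1) * braket (axis e 1) (y k) * braket (y k) (axis e 1)))"
    using 1 by (intro sum.cong refl) simp
  also have "... = (\<Sum>e\<in>UNIV. \<Sum>k<n. W k * (braket (axis a 1) (x k) * braket (x k) (axis c 1) * braket (axis e 1) (y k) * braket (y k) (axis e 1)))"
    by (rule sum.swap)
  also have "... = (\<Sum>e\<in>(UNIV::'n set). complex_of_real aa * (if a = e then 1 else 0) * (if e = c then 1 else 0)
        + complex_of_real bb * (if a = c then 1 else 0))"
    unfolding ST br_ax by simp
  also have "... = (\<Sum>e\<in>(UNIV::'n set). (if e = a then (if a = c then complex_of_real aa else 0) else 0)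
        + (if a = c then complex_of_real bb else 0))"
    by (intro sum.cong refl) auto
  also have "... = (if a = c then complex_of_real aa + complex_of_real bb * of_nat d else 0)"
    by (cases "a = c") (simp_all add: sum.distrib card_d)
  finally show ?thesis .
qed


lemma FY: "(\<Sum>k<n. W k * (y k$a * cnj (y k$c))) = (if a = c then complex_of_real aa + complex_of_real bb * of_nat d else 0)"
proof -
  have 1: "W k * (y k$a * cnj (y k$c)) =
     (\<Sum>e\<in>UNIV. W k * (braket (axis e 1) (x k) * braket (x k) (axis e 1) * braket (axis a 1) (y k) * braket (y k) (axis c 1)))" if k: "k < n" for k
  proof -
    have "W k * (y k$a * cnj (y k$c)) = W k * (braket (axis a 1) (y k) * braket (y k) (axis c 1)) * (\<Sum>e\<in>UNIV. braket (axis e 1) (x k) * braket (x k) (axis e 1))"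
      using one_x[OF k] by (simp add: br_axis_left br_axis_right)
    then show ?thesis by (simp add: sum_distrib_left mult_ac)
  qed
  have "(\<Sum>k<n. W k * (y k$a * cnj (y k$c)))
     = (\<Sum>k<n. \<Sum>e\<in>UNIV. W k * (braket (axis e 1) (x k) * braket (x k) (axis e 1) * braket (axis a 1) (y k) * braket (y k) (axis c 1)))"
    using 1 by (intro sum.cong refl) simp
  also have "... = (\<Sum>e\<in>UNIV. \<Sum>k<n. W k * (braket (axis e 1) (x k) * braket (x k) (axis e 1) * braket (axis a 1) (y k) * braket (y k) (axis c 1)))"
    by (rule sum.swap)
  also have "... = (\<Sum>e\<in>(UNIV::'n set). complex_of_real aa * (if e = c then 1 else 0) * (if a = e then 1 else 0)
        + complex_of_real bb * (if a = c then 1 else 0))"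
    unfolding ST br_ax by simp
  also have "... = (\<Sum>e\<in>(UNIV::'n set). (if e = a then (if a = c then complex_of_real aa else 0) else 0)
        + (if a = c then complex_of_real bb else 0))"
    by (intro sum.cong refl) auto
  also have "... = (if a = c then complex_of_real aa + complex_of_real bb * of_nat d else 0)"
    by (cases "a = c") (simp_all add: sum.distrib card_d)
  finally show ?thesis .
qed

end

context thm_setup begin

lemma dge: "real d \<ge> 2" using d2 by simp
lemma dpos: "real d > 0" using d2 by simp
lemma aa_d: "aa * real d = t" using dpos by (simp add: aa_def)
lemma bb_d2: "bb * real d ^ 2 = 1 - t" using dpos by (simp add: bb_def)
lemma dsq: "real d ^ 2 \<ge> 2 * real d"
proof -
  have "2 * real d \<le> real d * real d" using dge by (intro mult_right_mono) auto
  then show ?thesis by (simp add: power2_eq_square)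
qed
lemma t_lo': "t * (real d ^ 2 - 1) \<ge> -1"
proof -
  have "real d ^ 2 - 1 > 0" using dsq dge by linarith
  then have X: "real d ^ 2 - 1 > 0" .
  have "- 1 / (real d ^ 2 - 1) * (real d ^ 2 - 1) \<le> t * (real d ^ 2 - 1)"
    by (rule mult_right_mono[OF t_lo]) (use X in simp)
  moreover have "- 1 / (real d ^ 2 - 1) * (real d ^ 2 - 1) = -1" using X by simp
  ultimately show ?thesis by simp
qed
lemma t_hi': "t * (real d + 1) \<le> 1"
  using t_hi dpos by (simp add: pos_le_divide_eq)
lemma t_lt1: "t < 1"
proof -
  have "t * (real d + 1) \<le> 1" by (rule t_hi')
  show ?thesis
  proof (rule ccontr)
    assume "\<not> t < 1"
    then have "t * (real d + 1) \<ge> 1 * (real d + 1)" using dge by (intro mult_right_mono) auto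
    then have "real d + 1 \<le> t * (real d + 1)" by (simp only: mult_1)
    then show False using \<open>t * (real d + 1) \<le> 1\<close> dge by linarith
  qed
qed
lemma bb_pos: "bb > 0" using t_lt1 dpos by (simp add: bb_def)
lemma bma: "bb - aa \<ge> 0"
proof -
  have "aa = t * real d / real d ^ 2" using dpos by (simp add: aa_def power2_eq_square)
  then have "bb - aa = ((1 - t) - t * real d) / real d ^ 2" by (simp add: bb_def diff_divide_distrib)
  then have "bb - aa = (1 - t * (real d + 1)) / real d ^ 2" by (simp add: algebra_simps)
  then show ?thesis using t_hi' by simp
qed
lemma bpa: "bb + aa > 0"
proof -
  have "aa = t * real d / real d ^ 2" using dpos by (simp add: aa_def power2_eq_square)
  then have "bb + aa = ((1 - t) + t * real d) / real d ^ 2" by (simp add: bb_def add_divide_distrib)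
  then have e: "bb + aa = (1 + t * (real d - 1)) / real d ^ 2" by (simp add: algebra_simps)
  have "1 + t * (real d - 1) > 0"
  proof (cases "t \<ge> 0")
    case True
    have "t * (real d - 1) \<ge> 0" using True dge by (intro mult_nonneg_nonneg) auto
    then show ?thesis by simp
  next
    case False
    have "real d - 1 < real d ^ 2 - 1" using dge dsq by linarith
    then have "t * (real d - 1) > t * (real d ^ 2 - 1)" using False by (simp add: mult_less_cancel_left_neg)
    then show ?thesis using t_lo' by linarith
  qed
  then show ?thesis using e dpos by simp
qed
lemma c1_nn: "bb + t \<ge> 0"
proof -
  have "bb + t = (1 + t * (real d ^ 2 - 1)) / real d ^ 2" using dpos by (simp add: bb_def field_simps)
  then show ?thesis using t_lo' by simp
qed
lemma D_nn: "bb^2 - aa^2 \<ge> 0"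
proof -
  have "bb^2 - aa^2 = (bb - aa) * (bb + aa)" by (simp add: power2_eq_square algebra_simps)
  then show ?thesis using bma bpa by simp
qed
lemma D'_nn: "bb * (bb + t) \<ge> 0" using bb_pos c1_nn by simp

lemma aad_bb: "aa * real d + bb * real d ^ 2 = 1" using aa_d bb_d2 by simp

definition g :: "nat \<Rightarrow> real" where "g i = cmod (braket (x i) (y i)) ^ 2"

lemma Cg: "braket (x i) (y i) * cnj (braket (x i) (y i)) = complex_of_real (g i)"
  unfolding g_def by (rule complex_norm_square[symmetric])

lemma sumW_real: "(\<Sum>k<n. W k * complex_of_real (f k)) = complex_of_real (\<Sum>k<n. w k * f k)"
  by simp

lemma Tg: "(\<Sum>k<n. w k * g k) = aa * real d ^ 2 + bb * real d"
proof -
  have "complex_of_real (\<Sum>k<n. w k * g k) = (\<Sum>k<n. W k * (braket (x k) (y k) * cnj (braket (x k) (y k))))"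
    unfolding Cg by simp
  also have "... = complex_of_real (aa * real d ^ 2 + bb * real d)"
    using T by (simp add: br_cnj)
  finally show ?thesis by (simp only: of_real_eq_iff)
qed

definition hr :: "nat \<Rightarrow> nat \<Rightarrow> complex" where
  "hr i k = complex_of_real bb * (braket (x k) (x i) * braket (y k) (y i)) - complex_of_real aa * (braket (x k) (y i) * braket (y k) (x i))"

lemma rho_sum: assumes i: "i < n"
  shows "(\<Sum>k<n. w k * cmod (hr i k) ^ 2) = (bb^2 - aa^2) * (bb - aa * g i)"
proof -
  let ?H = "\<lambda>k. braket (x k) (x i) * braket (y k) (y i)"
  let ?A = "\<lambda>k. braket (x k) (y i) * braket (y k) (x i)"
  have ex: "W k * (hr i k * cnj (hr i k)) = complex_of_real (bb^2) * (W k * (?H k * cnj (?H k)))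
     - complex_of_real (aa * bb) * (W k * (?H k * cnj (?A k))) - complex_of_real (aa * bb) * (W k * (?A k * cnj (?H k)))
     + complex_of_real (aa^2) * (W k * (?A k * cnj (?A k)))" for k
    unfolding hr_def by (simp add: algebra_simps power2_eq_square)
  have "complex_of_real (\<Sum>k<n. w k * cmod (hr i k) ^ 2) = (\<Sum>k<n. W k * (hr i k * cnj (hr i k)))"
    by (simp add: complex_norm_square del: of_real_power)
  also have "... = complex_of_real (bb^2) * (\<Sum>k<n. W k * (?H k * cnj (?H k)))
     - complex_of_real (aa * bb) * (\<Sum>k<n. W k * (?H k * cnj (?A k))) - complex_of_real (aa * bb) * (\<Sum>k<n. W k * (?A k * cnj (?H k)))
     + complex_of_real (aa^2) * (\<Sum>k<n. W k * (?A k * cnj (?A k)))"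
    unfolding ex by (simp add: sum.distrib sum_subtractf sum_distrib_left)
  also have "... = complex_of_real (bb^2 * (aa * g i + bb) - aa * bb * (aa + bb * g i) - aa * bb * (aa + bb * g i) + aa^2 * (aa * g i + bb))"
    unfolding HH[OF i] AA[OF i] HA[OF i] AH[OF i] Cg by simp
  also have "... = complex_of_real ((bb^2 - aa^2) * (bb - aa * g i))"
    by (rule arg_cong[where f=complex_of_real]) (simp add: algebra_simps power2_eq_square)
  finally show ?thesis by (simp only: of_real_eq_iff)
qed

lemma rho_diag: "i < n \<Longrightarrow> hr i i = complex_of_real (bb - aa * g i)"
  unfolding hr_def using xx yy Cg[of i] by (simp add: br_cnj)

lemma rho_qs: "(\<Sum>i<n. w i * (bb - aa * g i)) = real n * (bb^2 - aa^2)"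
proof -
  have "(\<Sum>i<n. w i * (bb - aa * g i)) = bb * (\<Sum>i<n. w i) - aa * (\<Sum>i<n. w i * g i)"
    by (simp add: algebra_simps sum_subtractf sum_distrib_left)
  also have "... = bb - aa * (aa * real d ^ 2 + bb * real d)" using w_sum Tg by simp
  also have "... = real n * (bb^2 - aa^2)"
  proof -
    have "bb = bb * (aa * real d + bb * real d ^ 2)" using aad_bb by simp
    then show ?thesis unfolding n_def by (simp add: algebra_simps power2_eq_square)
  qed
  finally show ?thesis .
qed


definition hs :: "nat \<Rightarrow> nat \<Rightarrow> complex" where
  "hs i k = complex_of_real (bb + t) * (braket (x k) (x i) * braket (y i) (y k)) - complex_of_real aa * (braket (x k) (y k) * cnj (braket (x i) (y i)))"

lemma aa_sq: "aa^2 * (aa * real d ^ 2 + bb * real d) = aa * t * (t + bb)"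
  using dpos by (simp add: aa_def power2_eq_square field_simps)

lemma sigma_sum: assumes i: "i < n"
  shows "(\<Sum>k<n. w k * cmod (hs i k) ^ 2) = bb * (bb + t) * ((bb + t) - aa * g i)"
proof -
  let ?G = "\<lambda>k. braket (x k) (x i) * braket (y i) (y k)"
  let ?C = "\<lambda>k. braket (x k) (y k)"
  have ex: "W k * (hs i k * cnj (hs i k)) = complex_of_real ((bb + t)^2) * (W k * (?G k * cnj (?G k)))
     - complex_of_real ((bb + t) * aa) * ((W k * (?G k * cnj (?C k))) * ?C i)
     - complex_of_real ((bb + t) * aa) * ((W k * (cnj (?G k) * ?C k)) * cnj (?C i))
     + complex_of_real (aa^2) * ((W k * (?C k * cnj (?C k))) * (?C i * cnj (?C i)))" for k
    unfolding hs_def by (simp add: algebra_simps power2_eq_square)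
  have "complex_of_real (\<Sum>k<n. w k * cmod (hs i k) ^ 2) = (\<Sum>k<n. W k * (hs i k * cnj (hs i k)))"
    by (simp add: complex_norm_square del: of_real_power)
  also have "... = complex_of_real ((bb + t)^2) * (\<Sum>k<n. W k * (?G k * cnj (?G k)))
     - complex_of_real ((bb + t) * aa) * ((\<Sum>k<n. W k * (?G k * cnj (?C k))) * ?C i)
     - complex_of_real ((bb + t) * aa) * ((\<Sum>k<n. W k * (cnj (?G k) * ?C k)) * cnj (?C i))
     + complex_of_real (aa^2) * ((\<Sum>k<n. W k * (?C k * cnj (?C k))) * (?C i * cnj (?C i)))"
    unfolding ex by (simp add: sum.distrib sum_subtractf sum_distrib_left sum_distrib_right)
  also have "... = complex_of_real ((bb + t)^2 * (aa * g i + bb) - (bb + t) * aa * (aa * real d + bb) * g i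
       - (bb + t) * aa * (aa * real d + bb) * g i + aa^2 * (aa * real d ^ 2 + bb * real d) * g i)"
  proof -
    have T': "(\<Sum>k<n. W k * (?C k * cnj (?C k))) = complex_of_real (aa * real d ^ 2 + bb * real d)"
      using T by (simp add: br_cnj)
    have c1: "?C i * cnj (?C i) = complex_of_real (g i)" by (rule Cg)
    have mc: "(u * cnj z) * z = u * (z * cnj z)" for u z :: complex by (simp add: mult_ac)
    have mc2: "(u * z) * cnj z = u * (z * cnj z)" for u z :: complex by (simp add: mult_ac)
    show ?thesis
      unfolding GG[OF i] GC[OF i] CG[OF i] T' mc mc2 c1
      by simp
  qed
  also have "... = complex_of_real (bb * (bb + t) * ((bb + t) - aa * g i))"
  proof (rule arg_cong[where f=complex_of_real])
    have "aa * real d + bb = bb + t" using aa_d by simp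
    then show "(bb + t)^2 * (aa * g i + bb) - (bb + t) * aa * (aa * real d + bb) * g i
       - (bb + t) * aa * (aa * real d + bb) * g i + aa^2 * (aa * real d ^ 2 + bb * real d) * g i = bb * (bb + t) * ((bb + t) - aa * g i)"
      unfolding aa_sq by (simp add: algebra_simps power2_eq_square)
  qed
  finally show ?thesis by (simp only: of_real_eq_iff)
qed

lemma sigma_diag: "i < n \<Longrightarrow> hs i i = complex_of_real ((bb + t) - aa * g i)"
  unfolding hs_def using xx yy Cg[of i] by simp

lemma sigma_qs: "(\<Sum>i<n. w i * ((bb + t) - aa * g i)) = real n * (bb * (bb + t))"
proof -
  have "(\<Sum>i<n. w i * ((bb + t) - aa * g i)) = (bb + t) * (\<Sum>i<n. w i) - aa * (\<Sum>i<n. w i * g i)"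
    by (simp add: algebra_simps sum_subtractf sum_distrib_left)
  also have "... = (bb + t) - aa * (aa * real d ^ 2 + bb * real d)" using w_sum Tg by simp
  also have "... = (bb + t) - t * (t + bb)"
  proof -
    have "aa * (aa * real d ^ 2 + bb * real d) = (aa * real d) * (aa * real d + bb)" by (simp add: algebra_simps power2_eq_square)
    then show ?thesis using aa_d by simp
  qed
  also have "... = (1 - t) * (bb + t)" by (simp add: algebra_simps)
  also have "... = real n * (bb * (bb + t))"
    unfolding n_def bb_d2[symmetric] by simp
  finally show ?thesis .
qed

lemma blocks:
  shows w_q: "\<forall>i<n. w i * (bb - aa * g i) = bb^2 - aa^2"
    and w_q': "\<forall>i<n. w i * ((bb + t) - aa * g i) = bb * (bb + t)"
    and rho_off: "bb^2 - aa^2 > 0 \<Longrightarrow> \<forall>i<n. \<forall>k<n. k \<noteq> i \<longrightarrow> hr i k = 0"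
    and sigma_off: "bb * (bb + t) > 0 \<Longrightarrow> \<forall>i<n. \<forall>k<n. k \<noteq> i \<longrightarrow> hs i k = 0"
proof -
  have r1: "\<forall>i<n. hr i i = complex_of_real (bb - aa * g i)" using rho_diag by simp
  have r2: "\<forall>i<n. (\<Sum>k<n. w k * cmod (hr i k) ^ 2) = (bb^2 - aa^2) * (bb - aa * g i)" using rho_sum by simp
  have s1: "\<forall>i<n. hs i i = complex_of_real ((bb + t) - aa * g i)" using sigma_diag by simp
  have s2: "\<forall>i<n. (\<Sum>k<n. w k * cmod (hs i k) ^ 2) = bb * (bb + t) * ((bb + t) - aa * g i)" using sigma_sum by simp
  note R = cs_block[of n w "bb^2 - aa^2" hr "\<lambda>i. bb - aa * g i", OF w_nonneg D_nn r1 r2 rho_qs]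
  note S = cs_block[of n w "bb * (bb + t)" hs "\<lambda>i. (bb + t) - aa * g i", OF w_nonneg D'_nn s1 s2 sigma_qs]
  show "\<forall>i<n. w i * (bb - aa * g i) = bb^2 - aa^2" using R(1) .
  show "\<forall>i<n. w i * ((bb + t) - aa * g i) = bb * (bb + t)" using S(1) .
  show "bb^2 - aa^2 > 0 \<Longrightarrow> \<forall>i<n. \<forall>k<n. k \<noteq> i \<longrightarrow> hr i k = 0" using R(2) by blast
  show "bb * (bb + t) > 0 \<Longrightarrow> \<forall>i<n. \<forall>k<n. k \<noteq> i \<longrightarrow> hs i k = 0" using S(2) by blast
qed

lemma w_eq: "i < n \<Longrightarrow> w i = 1 / real d ^ 2"
proof -
  assume i: "i < n"
  have "w i * (bb - aa * g i) = bb^2 - aa^2" "w i * ((bb + t) - aa * g i) = bb * (bb + t)"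
    using w_q w_q' i by auto
  then have "w i * t = bb * t + aa^2" by (simp add: algebra_simps power2_eq_square)
  then have "w i = bb + aa^2 / t" using t0 by (simp add: field_simps)
  also have "... = 1 / real d ^ 2" using dpos t0 by (simp add: aa_def bb_def field_simps power2_eq_square)
  finally show ?thesis .
qed

lemma g_eq: "i < n \<Longrightarrow> g i = real d * (bb + t)"
proof -
  assume i: "i < n"
  have "w i * ((bb + t) - aa * g i) = bb * (bb + t)" using w_q' i by auto
  moreover have "real d ^ 2 * w i = 1" using w_eq[OF i] dpos by simp
  ultimately have "((bb + t) - aa * g i) = (bb * real d ^ 2) * (bb + t)"
    by (metis (no_types, lifting) mult.assoc mult.commute mult_1)
  then have "aa * g i = t * (bb + t)" unfolding bb_d2 by (simp add: algebra_simps)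
  then have "t * g i = t * (real d * (bb + t))" using dpos by (simp add: aa_def field_simps)
  then show "g i = real d * (bb + t)" using t0 by simp
qed

end

lemma ntrick:
  fixes N :: "nat \<Rightarrow> nat \<Rightarrow> complex" and \<nu> :: real and n :: nat
  assumes n0: "0 < n" and herm: "\<And>k l. k < n \<Longrightarrow> l < n \<Longrightarrow> cnj (N k l) = N l k"
    and idem: "\<And>k i. k < n \<Longrightarrow> i < n \<Longrightarrow> (\<Sum>l<n. N k l * N l i) = N k i"
    and diag: "\<And>k. k < n \<Longrightarrow> N k k = complex_of_real \<nu>" and nu: "\<nu> > 0" and nsum: "real n * \<nu> = 1"
  shows "\<And>l i. l < n \<Longrightarrow> i < n \<Longrightarrow> complex_of_real \<nu> * N l i = N 0 i * N l 0"
    and "\<And>i. i < n \<Longrightarrow> cmod (N 0 i) = \<nu>"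
proof -
  let ?S = "\<lambda>i. (\<Sum>l<n. cmod (complex_of_real \<nu> * N l i - N 0 i * N l 0) ^ 2)"
  have Nc: "N i 0 = cnj (N 0 i)" if "i < n" for i using herm[of 0 i] n0 that by simp
  have nrm: "N 0 i * N i 0 = complex_of_real (cmod (N 0 i) ^ 2)" if "i < n" for i
    using Nc[OF that] complex_norm_square[of "N 0 i"] by simp
  have S: "?S i = \<nu> * (\<nu>^2 - cmod (N 0 i) ^ 2)" if i: "i < n" for i
  proof -
    let ?u = "\<lambda>l. complex_of_real \<nu> * N l i" and ?v = "\<lambda>l. N 0 i * N l 0"
    have ex: "(?u l - ?v l) * cnj (?u l - ?v l) = complex_of_real (\<nu>^2) * (N i l * N l i)
       - complex_of_real \<nu> * N i 0 * (N 0 l * N l i) - complex_of_real \<nu> * N 0 i * (N i l * N l 0)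
       + N 0 i * N i 0 * (N 0 l * N l 0)" if l: "l < n" for l
    proof -
      have "cnj (N l i) = N i l" "cnj (N l 0) = N 0 l" "cnj (N 0 i) = N i 0"
        using herm l i n0 by auto
      then show ?thesis by (simp add: algebra_simps power2_eq_square)
    qed
    have "complex_of_real (?S i) = (\<Sum>l<n. (?u l - ?v l) * cnj (?u l - ?v l))"
      by (simp add: complex_norm_square del: of_real_power)
    also have "... = (\<Sum>l<n. complex_of_real (\<nu>^2) * (N i l * N l i)
       - complex_of_real \<nu> * N i 0 * (N 0 l * N l i) - complex_of_real \<nu> * N 0 i * (N i l * N l 0)
       + N 0 i * N i 0 * (N 0 l * N l 0))"
    proof (rule sum.cong[OF refl])
      fix l assume "l \<in> {..<n}"
      then show "(?u l - ?v l) * cnj (?u l - ?v l) = complex_of_real (\<nu>^2) * (N i l * N l i)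
       - complex_of_real \<nu> * N i 0 * (N 0 l * N l i) - complex_of_real \<nu> * N 0 i * (N i l * N l 0)
       + N 0 i * N i 0 * (N 0 l * N l 0)" by (intro ex) simp
    qed
    also have "... = complex_of_real (\<nu>^2) * (\<Sum>l<n. N i l * N l i)
       - complex_of_real \<nu> * N i 0 * (\<Sum>l<n. N 0 l * N l i) - complex_of_real \<nu> * N 0 i * (\<Sum>l<n. N i l * N l 0)
       + N 0 i * N i 0 * (\<Sum>l<n. N 0 l * N l 0)"
      by (simp add: sum.distrib sum_subtractf sum_distrib_left)
    also have "... = complex_of_real (\<nu>^2) * N i i - complex_of_real \<nu> * (N 0 i * N i 0) - complex_of_real \<nu> * (N 0 i * N i 0)
       + (N 0 i * N i 0) * N 0 0"
      unfolding idem[OF i i] idem[OF n0 i] idem[OF i n0] idem[OF n0 n0] by (simp add: algebra_simps)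
    also have "... = complex_of_real (\<nu> * (\<nu>^2 - cmod (N 0 i) ^ 2))"
      unfolding nrm[OF i] diag[OF i] diag[OF n0] by (simp add: algebra_simps power2_eq_square)
    finally show ?thesis by (simp only: of_real_eq_iff)
  qed
  have Snn: "?S i \<ge> 0" for i by (intro sum_nonneg) auto
  have tnn: "\<nu>^2 - cmod (N 0 i) ^ 2 \<ge> 0" if "i < n" for i
    using S[OF that] Snn[of i] nu by (simp add: zero_le_mult_iff)
  have "complex_of_real (\<Sum>i<n. cmod (N 0 i) ^ 2) = (\<Sum>i<n. N 0 i * N i 0)"
    using nrm by simp
  also have "... = complex_of_real \<nu>" using idem[OF n0 n0] diag[OF n0] by simp
  finally have s1: "(\<Sum>i<n. cmod (N 0 i) ^ 2) = \<nu>" by (simp only: of_real_eq_iff)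
  have "(\<Sum>i<n. \<nu>^2 - cmod (N 0 i) ^ 2) = real n * \<nu>^2 - \<nu>"
    using s1 by (simp add: sum_subtractf)
  also have "... = 0" using nsum by (simp add: power2_eq_square algebra_simps)
  finally have "\<forall>i\<in>{..<n}. \<nu>^2 - cmod (N 0 i) ^ 2 = 0"
    using sum_nonneg_eq_0_iff[of "{..<n}" "\<lambda>i. \<nu>^2 - cmod (N 0 i) ^ 2"] tnn by simp
  then have z: "\<nu>^2 - cmod (N 0 i) ^ 2 = 0" if "i < n" for i using that by simp
  show "cmod (N 0 i) = \<nu>" if "i < n" for i
  proof -
    have "cmod (N 0 i) ^ 2 = \<nu> ^ 2" using z[OF that] by simp
    then show ?thesis using nu by (simp add: power2_eq_iff_nonneg)
  qed
  show "complex_of_real \<nu> * N l i = N 0 i * N l 0" if l: "l < n" and i: "i < n" for l i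
  proof -
    have "?S i = 0" using S[OF i] z[OF i] by simp
    then have "\<forall>l\<in>{..<n}. cmod (complex_of_real \<nu> * N l i - N 0 i * N l 0) ^ 2 = 0"
      using sum_nonneg_eq_0_iff[of "{..<n}" "\<lambda>l. cmod (complex_of_real \<nu> * N l i - N 0 i * N l 0) ^ 2"] by simp
    then show ?thesis using l by simp
  qed
qed

context thm_setup begin

lemma n0: "0 < n" using d2 n_def by simp

lemma W_val: "k < n \<Longrightarrow> W k = complex_of_real (1 / real d ^ 2)" using w_eq by simp

lemma C_zero_edge: assumes e: "bb + t = 0" and k: "k < n" shows "braket (x k) (y k) = 0"
proof -
  have "g k = 0" using g_eq[OF k] e by simp
  then show ?thesis unfolding g_def by simp
qed

definition Gm :: "nat \<Rightarrow> nat \<Rightarrow> complex" where "Gm k l = braket (x k) (x l) * braket (y l) (y k)"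

lemma Gm_herm: "cnj (Gm k l) = Gm l k" unfolding Gm_def by (simp add: br_cnj mult.commute)
lemma Gm_diag: "k < n \<Longrightarrow> Gm k k = 1" unfolding Gm_def using xx yy by simp

lemma Gm_prod: assumes e: "bb + t = 0" and k: "k < n" and i: "i < n"
  shows "(\<Sum>l<n. Gm k l * Gm l i) = complex_of_real (real d ^ 2 * bb) * Gm k i"
proof -
  have "(\<Sum>l<n. W l * (Gm k l * Gm l i)) = complex_of_real bb * Gm k i"
    using GGprod[OF i k] C_zero_edge[OF e k] unfolding Gm_def by simp
  moreover have "(\<Sum>l<n. W l * (Gm k l * Gm l i)) = complex_of_real (1 / real d ^ 2) * (\<Sum>l<n. Gm k l * Gm l i)"
    using W_val by (simp add: sum_distrib_left)
  ultimately have "complex_of_real (1 / real d ^ 2) * (\<Sum>l<n. Gm k l * Gm l i) = complex_of_real bb * Gm k i" by simp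
  then have "complex_of_real (real d ^ 2) * (complex_of_real (1 / real d ^ 2) * (\<Sum>l<n. Gm k l * Gm l i)) = complex_of_real (real d ^ 2) * (complex_of_real bb * Gm k i)" by simp
  then show ?thesis using dpos by (simp add: mult.assoc[symmetric])
qed

lemma edge:
  assumes e: "bb + t = 0"
  shows "\<exists>\<epsilon>. (\<forall>k<n. cmod (\<epsilon> k) = 1) \<and> (\<forall>j<n. \<forall>i<n. j \<noteq> i \<longrightarrow> Gm j i = complex_of_real t * \<epsilon> j * cnj (\<epsilon> i))"
proof -
  define c where "c = real d ^ 2 * bb"
  define \<nu> where "\<nu> = 1 / real d ^ 2"
  define N where "N k l = (if k = l then 1 else 0) - Gm k l / complex_of_real c" for k l
  have cpos: "c > 0" unfolding c_def using bb_pos dpos by simp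
  have c1t: "c = 1 - t" unfolding c_def using bb_d2 by (simp add: mult.commute)
  have nupos: "\<nu> > 0" unfolding \<nu>_def using dpos by simp
  have cnu: "c * \<nu> = bb" unfolding c_def \<nu>_def using dpos by simp
  have herm: "cnj (N k l) = N l k" if "k < n" "l < n" for k l
    unfolding N_def using Gm_herm[of k l] by auto
  have diag: "N k k = complex_of_real \<nu>" if k: "k < n" for k
  proof -
    have "N k k = 1 - 1 / complex_of_real c" unfolding N_def using Gm_diag[OF k] by simp
    also have "... = complex_of_real (1 - 1 / c)" by simp
    also have "1 - 1 / c = \<nu>"
    proof -
      have "bb = - t" using e by simp
      then have "c = - t * real d ^ 2" unfolding c_def by simp
      then have "c * \<nu> = - t" unfolding \<nu>_def using dpos by simp
      then have "c - 1 = c * \<nu>" using c1t by simp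
      then show ?thesis using cpos by (simp add: field_simps)
    qed
    finally show ?thesis .
  qed
  have nsum: "real n * \<nu> = 1" unfolding n_def \<nu>_def using dpos by simp
  have idem: "(\<Sum>l<n. N k l * N l i) = N k i" if k: "k < n" and i: "i < n" for k i
  proof -
    let ?c = "complex_of_real c"
    have cz: "?c \<noteq> 0" using cpos by simp
    have ex: "N k l * N l i = (if l = k then (if l = i then 1 else 0) else 0) - (if l = k then Gm l i / ?c else 0)
        - (if l = i then Gm k l / ?c else 0) + Gm k l * Gm l i / (?c * ?c)" for l
      unfolding N_def by (auto simp: algebra_simps)
    have "(\<Sum>l<n. N k l * N l i) = (if k = i then 1 else 0) - Gm k i / ?c - Gm k i / ?c + (\<Sum>l<n. Gm k l * Gm l i) / (?c * ?c)"
      unfolding ex using k i by (simp add: sum.distrib sum_subtractf sum_divide_distrib)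
    also have "... = (if k = i then 1 else 0) - Gm k i / ?c"
      unfolding Gm_prod[OF e k i] c_def[symmetric] using cz by (simp add: field_simps)
    also have "... = N k i" unfolding N_def ..
    finally show ?thesis .
  qed
  have NT1: "complex_of_real \<nu> * N l i = N 0 i * N l 0" if "l < n" "i < n" for l i
    apply (rule ntrick(1)[of n N \<nu>])
    using n0 herm idem diag nupos nsum that by auto
  have NT2: "cmod (N 0 i) = \<nu>" if "i < n" for i
    apply (rule ntrick(2)[of n N \<nu>])
    using n0 herm idem diag nupos nsum that by auto
  define \<epsilon> where "\<epsilon> j = N j 0 / complex_of_real \<nu>" for j
  have unit: "cmod (\<epsilon> k) = 1" if k: "k < n" for k
  proof -
    have "N k 0 = cnj (N 0 k)" using herm[OF n0 k] by (metis complex_cnj_cnj)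
    then have "cmod (N k 0) = \<nu>" using NT2[OF k] by simp
    then show ?thesis unfolding \<epsilon>_def using nupos by (simp add: norm_divide)
  qed
  have rel: "Gm j i = complex_of_real t * \<epsilon> j * cnj (\<epsilon> i)" if j: "j < n" and i: "i < n" and ji: "j \<noteq> i" for j i
  proof -
    have "N j i = - Gm j i / complex_of_real c" unfolding N_def using ji by simp
    then have G1: "Gm j i = - complex_of_real c * N j i" using cpos by (simp add: field_simps)
    have "complex_of_real \<nu> * N j i = N 0 i * N j 0" using NT1[OF j i] .
    moreover have "cnj (N i 0) = N 0 i" using herm[OF i n0] .
    moreover have "t = - c * \<nu>" using cnu e by simp
    ultimately show ?thesis unfolding G1 \<epsilon>_def using nupos
      by (simp add: field_simps)
  qed
  show ?thesis using unit rel by blast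
qed


lemma C_abs: "i < n \<Longrightarrow> cmod (braket (x i) (y i)) = sqrt (real d * (bb + t))"
proof -
  assume i: "i < n"
  have "cmod (braket (x i) (y i)) ^ 2 = real d * (bb + t)" using g_eq[OF i] unfolding g_def .
  moreover have "sqrt (cmod (braket (x i) (y i)) ^ 2) = cmod (braket (x i) (y i))" by simp
  ultimately show ?thesis by simp
qed

lemma cmod_br_swap: "cmod (braket u v) = cmod (braket v u)"
proof -
  have "braket u v = cnj (braket v u)" by (simp add: br_cnj)
  then show ?thesis by simp
qed

lemma abs_aa_d: "\<bar>aa\<bar> * real d = \<bar>t\<bar>"
proof -
  have "\<bar>aa * real d\<bar> = \<bar>t\<bar>" using aa_d by simp
  then show ?thesis by (simp add: abs_mult)
qed

lemma absG: assumes k: "k < n" and i: "i < n" and ki: "k \<noteq> i"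
  shows "cmod (Gm k i) = \<bar>t\<bar>"
proof (cases "bb + t > 0")
  case True
  have "hs i k = 0" using sigma_off True bb_pos k i ki by simp
  then have eq: "complex_of_real (bb + t) * Gm k i = complex_of_real aa * (braket (x k) (y k) * cnj (braket (x i) (y i)))"
    unfolding hs_def Gm_def by simp
  have "(bb + t) * cmod (Gm k i) = cmod (complex_of_real (bb + t) * Gm k i)"
    unfolding norm_mult norm_of_real using True by simp
  also have "... = \<bar>aa\<bar> * (cmod (braket (x k) (y k)) * cmod (braket (x i) (y i)))"
    unfolding eq by (simp add: norm_mult)
  also have "... = \<bar>aa\<bar> * (real d * (bb + t))"
    unfolding C_abs[OF k] C_abs[OF i] using dpos True by simp
  finally have "(bb + t) * cmod (Gm k i) = (bb + t) * (\<bar>aa\<bar> * real d)" by (simp add: mult_ac)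
  then show ?thesis using True abs_aa_d by simp
next
  case False
  then have e: "bb + t = 0" using c1_nn by simp
  obtain \<epsilon> where u: "\<forall>k<n. cmod (\<epsilon> k) = 1" and r: "\<forall>j<n. \<forall>i<n. j \<noteq> i \<longrightarrow> Gm j i = complex_of_real t * \<epsilon> j * cnj (\<epsilon> i)"
    using edge[OF e] by blast
  show ?thesis using u r k i ki by (simp add: norm_mult)
qed

lemma absH: assumes k: "k < n" and i: "i < n" and ki: "k \<noteq> i"
  shows "cmod (braket (x k) (x i) * braket (y k) (y i)) = \<bar>t\<bar>"
  using absG[OF k i ki] unfolding Gm_def by (simp add: norm_mult cmod_br_swap[of "y k"])

lemma absA: assumes k: "k < n" and i: "i < n" and ki: "k \<noteq> i"
  shows "cmod (braket (x k) (y i)) * cmod (braket (x i) (y k)) = (1 - t) / real d"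
proof (cases "bb - aa > 0")
  case True
  have "(bb - aa) * (bb + aa) > 0" using True bpa by (intro mult_pos_pos)
  then have "bb^2 - aa^2 > 0" by (simp add: power2_eq_square algebra_simps)
  then have "hr i k = 0" using rho_off k i ki by simp
  then have eq: "complex_of_real bb * (braket (x k) (x i) * braket (y k) (y i)) = complex_of_real aa * (braket (x k) (y i) * braket (y k) (x i))"
    unfolding hr_def by simp
  have "bb * \<bar>t\<bar> = cmod (complex_of_real bb * (braket (x k) (x i) * braket (y k) (y i)))"
    using absH[OF k i ki] bb_pos by (simp add: norm_mult)
  also have "... = \<bar>aa\<bar> * (cmod (braket (x k) (y i)) * cmod (braket (x i) (y k)))"
    unfolding eq by (simp add: norm_mult cmod_br_swap[of "y k"])
  finally have "\<bar>aa\<bar> * (cmod (braket (x k) (y i)) * cmod (braket (x i) (y k))) = \<bar>aa\<bar> * (bb * real d)"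
    using abs_aa_d by (simp add: mult_ac)
  moreover have "\<bar>aa\<bar> > 0" using t0 dpos by (simp add: aa_def)
  ultimately have "cmod (braket (x k) (y i)) * cmod (braket (x i) (y k)) = bb * real d" by simp
  also have "... = (1 - t) / real d" using dpos by (simp add: bb_def power2_eq_square)
  finally show ?thesis .
next
  case False
  then have ab: "bb = aa" using bma by simp
  have tt: "1 - t = t * real d"
  proof -
    have "1 - t = bb * real d ^ 2" using bb_d2 by simp
    also have "... = (aa * real d) * real d" using ab by (simp add: power2_eq_square)
    also have "... = t * real d" using aa_d by simp
    finally show ?thesis .
  qed
  have g1: "real d * (bb + t) = 1"
  proof -
    have "real d * (bb + t) = aa * real d + t * real d" using ab by (simp add: algebra_simps)
    also have "... = t + (1 - t)" using aa_d tt by simp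
    finally show ?thesis by simp
  qed
  have ye: "y j = braket (x j) (y j) *s x j" and cu: "cmod (braket (x j) (y j)) = 1" if j: "j < n" for j
  proof -
    show cu: "cmod (braket (x j) (y j)) = 1" using C_abs[OF j] g1 by simp
    show "y j = braket (x j) (y j) *s x j" using cs_equal[of "x j" "y j"] x_unit y_unit j cu by simp
  qed
  have A1: "cmod (braket (x k) (y i)) = cmod (braket (x k) (x i))"
    by (subst ye[OF i]) (simp add: br_smult_right norm_mult cu[OF i])
  have A2: "cmod (braket (x i) (y k)) = cmod (braket (x k) (x i))"
    by (subst ye[OF k]) (simp add: br_smult_right norm_mult cu[OF k] cmod_br_swap[of "x i"])
  have H1: "cmod (braket (y k) (y i)) = cmod (braket (x k) (x i))"
    by (subst ye[OF k], subst ye[OF i]) (simp add: br_smult_right br_smult_left norm_mult cu[OF k] cu[OF i])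
  have "cmod (braket (x k) (y i)) * cmod (braket (x i) (y k)) = \<bar>t\<bar>"
    using absH[OF k i ki] A1 A2 H1 by (simp add: norm_mult)
  moreover have "t > 0"
  proof -
    have "t * (real d + 1) = 1" using tt by (simp add: algebra_simps)
    show ?thesis
    proof (rule ccontr)
      assume "\<not> t > 0"
      then have "t * (real d + 1) \<le> 0" using dpos by (intro mult_nonpos_nonneg) auto
      then show False using \<open>t * (real d + 1) = 1\<close> by simp
    qed
  qed
  ultimately show ?thesis using tt dpos by simp
qed

end

context thm_setup begin

lemma Row': assumes i: "i < n" shows "(\<Sum>k<n. cmod (braket (x k) (y i)) ^ 2) = real d"
proof -
  have "complex_of_real (\<Sum>k<n. w k * cmod (braket (x k) (y i)) ^ 2) = (\<Sum>k<n. W k * (braket (x k) (y i) * cnj (braket (x k) (y i))))"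
    by (simp add: complex_norm_square del: of_real_power)
  also have "... = complex_of_real (aa + bb * real d)" using Row[OF i] by simp
  finally have "(\<Sum>k<n. w k * cmod (braket (x k) (y i)) ^ 2) = aa + bb * real d" by (simp only: of_real_eq_iff)
  moreover have "(\<Sum>k<n. w k * cmod (braket (x k) (y i)) ^ 2) = (\<Sum>k<n. cmod (braket (x k) (y i)) ^ 2) / real d ^ 2"
    using w_eq by (simp add: sum_divide_distrib)
  ultimately have "(\<Sum>k<n. cmod (braket (x k) (y i)) ^ 2) = real d ^ 2 * (aa + bb * real d)" using dpos by (simp add: field_simps)
  also have "... = real d * (aa * real d + bb * real d ^ 2)" by (simp add: algebra_simps power2_eq_square)
  finally show ?thesis using aad_bb by simp
qed

lemma Col': assumes i: "i < n" shows "(\<Sum>k<n. cmod (braket (x i) (y k)) ^ 2) = real d"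
proof -
  have "complex_of_real (\<Sum>k<n. w k * cmod (braket (x i) (y k)) ^ 2) = (\<Sum>k<n. W k * (braket (x i) (y k) * cnj (braket (x i) (y k))))"
    by (simp add: complex_norm_square del: of_real_power)
  also have "... = complex_of_real (aa + bb * real d)" using Col[OF i] by simp
  finally have "(\<Sum>k<n. w k * cmod (braket (x i) (y k)) ^ 2) = aa + bb * real d" by (simp only: of_real_eq_iff)
  moreover have "(\<Sum>k<n. w k * cmod (braket (x i) (y k)) ^ 2) = (\<Sum>k<n. cmod (braket (x i) (y k)) ^ 2) / real d ^ 2"
    using w_eq by (simp add: sum_divide_distrib)
  ultimately have "(\<Sum>k<n. cmod (braket (x i) (y k)) ^ 2) = real d ^ 2 * (aa + bb * real d)" using dpos by (simp add: field_simps)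
  also have "... = real d * (aa * real d + bb * real d ^ 2)" by (simp add: algebra_simps power2_eq_square)
  finally show ?thesis using aad_bb by simp
qed

lemma P_eq: assumes k: "k < n" and i: "i < n" and ki: "k \<noteq> i"
  shows "cmod (braket (x k) (y i)) ^ 2 = (1 - t) / real d"
proof -
  define m where "m j = cmod (braket (x j) (y i))" for j
  define m' where "m' j = cmod (braket (x i) (y j))" for j
  define s where "s = (1 - t) / real d"
  have mm: "m j * m' j = s" if "j < n" "j \<noteq> i" for j
    unfolding m_def m'_def s_def using absA that i by simp
  have mii: "m i * m' i = real d * (bb + t)"
    unfolding m_def m'_def using C_abs[OF i] c1_nn dpos by simp
  have "(\<Sum>j<n. m j * m' j) = m i * m' i + (\<Sum>j\<in>{..<n}-{i}. m j * m' j)"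
    using i by (subst sum.remove[of _ i]) auto
  also have "(\<Sum>j\<in>{..<n}-{i}. m j * m' j) = (\<Sum>j\<in>{..<n}-{i}. s)"
    using mm by (intro sum.cong refl) auto
  also have "... = (real n - 1) * s" using i by (simp add: of_nat_diff)
  finally have sp: "(\<Sum>j<n. m j * m' j) = real d * (bb + t) + (real n - 1) * s" using mii by simp
  have key: "real d * (bb + t) + (real n - 1) * s = real d"
  proof -
    have "real d * (real d * (bb + t) + (real n - 1) * s) = (bb * real d ^ 2) + t * real d ^ 2 + (real d ^ 2 - 1) * (1 - t)"
      unfolding s_def n_def using dpos by (simp add: field_simps power2_eq_square)
    also have "... = real d * real d" unfolding bb_d2 by (simp add: algebra_simps power2_eq_square)
    finally show ?thesis using dpos by simp
  qed
  have "(\<Sum>j<n. (m j - m' j) ^ 2) = (\<Sum>j<n. m j ^ 2) + (\<Sum>j<n. m' j ^ 2) - 2 * (\<Sum>j<n. m j * m' j)"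
    by (simp add: power2_diff sum.distrib sum_subtractf sum_distrib_left mult.assoc)
  also have "... = 0" unfolding sp key using Row'[OF i] Col'[OF i] unfolding m_def m'_def by simp
  finally have "\<forall>j\<in>{..<n}. (m j - m' j) ^ 2 = 0"
    using sum_nonneg_eq_0_iff[of "{..<n}" "\<lambda>j. (m j - m' j) ^ 2"] by simp
  then have "m k = m' k" using k by simp
  then have "m k ^ 2 = s" using mm[OF k ki] by (simp add: power2_eq_square)
  then show ?thesis unfolding m_def s_def .
qed


lemma gval: "real d * (bb + t) = (t * (real d ^ 2 - 1) + 1) / real d"
  using dpos by (simp add: bb_def field_simps power2_eq_square)

lemma phase:
  "\<exists>\<alpha> \<beta> :: nat \<Rightarrow> complex.
          (\<forall>i<n. norm (\<alpha> i) = 1 \<and> norm (\<beta> i) = 1)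
        \<and> (\<forall>i<n. \<forall>j<n. i \<noteq> j \<longrightarrow>
              (cmod (braket (\<alpha> i *s x i) (\<beta> j *s y j)))^2 = (1 - t) / real d
            \<and> braket (\<alpha> i *s x i) (\<beta> i *s y i) = complex_of_real (sqrt ((t * (real d ^ 2 - 1) + 1) / real d))
            \<and> braket (\<alpha> j *s x j) (\<alpha> i *s x i) * braket (\<beta> i *s y i) (\<beta> j *s y j) = complex_of_real t)"
proof (cases "bb + t > 0")
  case True
  define \<beta> where "\<beta> k = cnj (braket (x k) (y k)) / complex_of_real (cmod (braket (x k) (y k)))" for k
  let ?r = "sqrt (real d * (bb + t))"
  have rpos: "?r > 0" using True dpos by simp
  have Cabs: "cmod (braket (x k) (y k)) = ?r" if "k < n" for k using C_abs that by simp
  have bu: "norm (\<beta> k) = 1" if k: "k < n" for k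
    unfolding \<beta>_def using Cabs[OF k] rpos True dpos by (simp add: norm_divide)
  have bC: "\<beta> k * braket (x k) (y k) = complex_of_real ?r" if k: "k < n" for k
  proof -
    have "\<beta> k * braket (x k) (y k) = complex_of_real (cmod (braket (x k) (y k)) ^ 2) / complex_of_real (cmod (braket (x k) (y k)))"
      unfolding \<beta>_def by (simp add: complex_norm_square mult.commute del: of_real_power)
    also have "... = complex_of_real (cmod (braket (x k) (y k)))"
    proof -
      have "cmod (braket (x k) (y k)) \<noteq> 0" using rpos Cabs[OF k] True dpos by simp
      then show ?thesis by (simp add: power2_eq_square)
    qed
    also have "... = complex_of_real ?r" using Cabs[OF k] by simp
    finally show ?thesis .
  qed
  have main: "braket (x j) (x i) * braket (\<beta> i *s y i) (\<beta> j *s y j) = complex_of_real t"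
    if i: "i < n" and j: "j < n" and ij: "i \<noteq> j" for i j
  proof -
    have "hs i j = 0" using sigma_off True bb_pos i j ij by simp
    then have eq: "complex_of_real (bb + t) * (braket (x j) (x i) * braket (y i) (y j)) = complex_of_real aa * (braket (x j) (y j) * cnj (braket (x i) (y i)))"
      unfolding hs_def by simp
    have "braket (x j) (x i) * braket (\<beta> i *s y i) (\<beta> j *s y j) = (cnj (\<beta> i) * \<beta> j) * (braket (x j) (x i) * braket (y i) (y j))"
      by (simp add: br_scale br_smult_right br_smult_left mult_ac)
    also have "... = (cnj (\<beta> i) * \<beta> j) * (complex_of_real (aa / (bb + t)) * (braket (x j) (y j) * cnj (braket (x i) (y i))))"
    proof -
      have "braket (x j) (x i) * braket (y i) (y j) = complex_of_real (aa / (bb + t)) * (braket (x j) (y j) * cnj (braket (x i) (y i)))"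
      proof -
        have solve: "G = (a / c) * R" if "c \<noteq> 0" "c * G = a * R" for a c G R :: complex
          using that by (simp add: field_simps)
        have "complex_of_real (bb + t) \<noteq> 0" using True by (simp del: of_real_add)
        from solve[OF this eq] show ?thesis by (simp only: of_real_divide)
      qed
      then show ?thesis by simp
    qed
    also have "... = complex_of_real (aa / (bb + t)) * (\<beta> j * braket (x j) (y j)) * cnj (\<beta> i * braket (x i) (y i))"
      by (simp add: mult_ac)
    also have "... = complex_of_real (aa / (bb + t) * (?r * ?r))" unfolding bC[OF i] bC[OF j] by (simp only: complex_cnj_complex_of_real of_real_mult mult.assoc)
    also have "aa / (bb + t) * (?r * ?r) = t"
    proof -
      have "?r * ?r = real d * (bb + t)" using True dpos by simp
      then have "aa / (bb + t) * (?r * ?r) = aa * real d" using True by simp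
      then show ?thesis using aa_d by simp
    qed
    finally show ?thesis .
  qed
  show ?thesis
  proof (rule exI[of _ "\<lambda>_. 1"], rule exI[of _ \<beta>], intro conjI allI impI)
    fix i assume i: "i < n"
    show "norm ((\<lambda>_. 1::complex) i) = 1" by simp
  next
    fix i assume i: "i < n"
    show "norm (\<beta> i) = 1" using bu[OF i] .
  next
    fix i j assume i: "i < n" and j: "j < n" and ij: "i \<noteq> j"
    show "(cmod (braket ((\<lambda>_. 1) i *s x i) (\<beta> j *s y j)))^2 = (1 - t) / real d"
      using P_eq[OF i j ij] bu[OF j] by (simp add: br_scale br_smult_right br_smult_left norm_mult)
  next
    fix i j assume i: "i < n" and j: "j < n" and ij: "i \<noteq> j"
    show "braket ((\<lambda>_. 1) i *s x i) (\<beta> i *s y i) = complex_of_real (sqrt ((t * (real d ^ 2 - 1) + 1) / real d))"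
      using bC[OF i] gval by (simp add: br_scale br_smult_right br_smult_left mult.commute)
  next
    fix i j assume i: "i < n" and j: "j < n" and ij: "i \<noteq> j"
    show "braket ((\<lambda>_. 1) j *s x j) ((\<lambda>_. 1) i *s x i) * braket (\<beta> i *s y i) (\<beta> j *s y j) = complex_of_real t"
      using main[OF i j ij] by (simp add: br_scale br_smult_right br_smult_left)
  qed
next
  case False
  then have e: "bb + t = 0" using c1_nn by simp
  obtain \<epsilon> where u: "\<forall>k<n. cmod (\<epsilon> k) = 1" and r: "\<forall>j<n. \<forall>i<n. j \<noteq> i \<longrightarrow> Gm j i = complex_of_real t * \<epsilon> j * cnj (\<epsilon> i)"
    using edge[OF e] by blast
  define \<beta> where "\<beta> k = cnj (\<epsilon> k)" for k
  have bu: "norm (\<beta> k) = 1" if "k < n" for k unfolding \<beta>_def using u that by simp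
  have ee: "\<epsilon> k * cnj (\<epsilon> k) = 1" if "k < n" for k
    using complex_norm_square[of "\<epsilon> k"] u that by simp
  show ?thesis
  proof (rule exI[of _ "\<lambda>_. 1"], rule exI[of _ \<beta>], intro conjI allI impI)
    fix i assume i: "i < n"
    show "norm ((\<lambda>_. 1::complex) i) = 1" by simp
  next
    fix i assume i: "i < n"
    show "norm (\<beta> i) = 1" using bu[OF i] .
  next
    fix i j assume i: "i < n" and j: "j < n" and ij: "i \<noteq> j"
    show "(cmod (braket ((\<lambda>_. 1) i *s x i) (\<beta> j *s y j)))^2 = (1 - t) / real d"
      using P_eq[OF i j ij] bu[OF j] by (simp add: br_scale br_smult_right br_smult_left norm_mult)
  next
    fix i j assume i: "i < n" and j: "j < n" and ij: "i \<noteq> j"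
    have z: "(t * (real d ^ 2 - 1) + 1) / real d = 0" using gval e by simp
    show "braket ((\<lambda>_. 1) i *s x i) (\<beta> i *s y i) = complex_of_real (sqrt ((t * (real d ^ 2 - 1) + 1) / real d))"
      unfolding z using C_zero_edge[OF e i] by (simp add: br_scale br_smult_right br_smult_left)
  next
    fix i j assume i: "i < n" and j: "j < n" and ij: "i \<noteq> j"
    have "Gm j i = complex_of_real t * \<epsilon> j * cnj (\<epsilon> i)" using r i j ij by simp
    then have "braket (x j) (x i) * braket (y i) (y j) = complex_of_real t * \<epsilon> j * cnj (\<epsilon> i)" unfolding Gm_def .
    then have "braket ((\<lambda>_. 1) j *s x j) ((\<lambda>_. 1) i *s x i) * braket (\<beta> i *s y i) (\<beta> j *s y j)
        = complex_of_real t * (\<epsilon> i * cnj (\<epsilon> i)) * (\<epsilon> j * cnj (\<epsilon> j))"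
      unfolding \<beta>_def by (simp add: br_scale br_smult_right br_smult_left mult_ac)
    then show "braket ((\<lambda>_. 1) j *s x j) ((\<lambda>_. 1) i *s x i) * braket (\<beta> i *s y i) (\<beta> j *s y j) = complex_of_real t"
      using ee[OF i] ee[OF j] by simp
  qed
qed

end

context thm_setup begin

lemma sumW_const: "(\<Sum>k<n. W k * f k) = complex_of_real (1 / real d ^ 2) * (\<Sum>k<n. f k)"
  using w_eq by (simp add: sum_distrib_left)

lemma d2_inv: "complex_of_real (real d ^ 2) * complex_of_real (1 / real d ^ 2) = 1"
  using dpos by (simp flip: of_real_mult)

lemma FX': "(\<Sum>k<n. x k$a * cnj (x k$c)) = (if a = c then of_nat d else 0)"
proof -
  have "complex_of_real (1 / real d ^ 2) * (\<Sum>k<n. x k$a * cnj (x k$c)) = (if a = c then complex_of_real aa + complex_of_real bb * of_nat d else 0)"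
    using FX[of a c] sumW_const by simp
  then have "(\<Sum>k<n. x k$a * cnj (x k$c)) = complex_of_real (real d ^ 2) * (if a = c then complex_of_real aa + complex_of_real bb * of_nat d else 0)"
  proof -
    assume h: "complex_of_real (1 / real d ^ 2) * (\<Sum>k<n. x k$a * cnj (x k$c)) = (if a = c then complex_of_real aa + complex_of_real bb * of_nat d else 0)"
    have "(\<Sum>k<n. x k$a * cnj (x k$c)) = (complex_of_real (real d ^ 2) * complex_of_real (1 / real d ^ 2)) * (\<Sum>k<n. x k$a * cnj (x k$c))"
      by (simp only: d2_inv mult_1)
    also have "... = complex_of_real (real d ^ 2) * (complex_of_real (1 / real d ^ 2) * (\<Sum>k<n. x k$a * cnj (x k$c)))"
      by (simp only: mult.assoc)
    finally show ?thesis unfolding h .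
  qed
  also have "... = (if a = c then of_nat d else 0)"
    using aa_bb by (simp add: algebra_simps power2_eq_square)
  finally show ?thesis .
qed

lemma FY': "(\<Sum>k<n. y k$a * cnj (y k$c)) = (if a = c then of_nat d else 0)"
proof -
  have "complex_of_real (1 / real d ^ 2) * (\<Sum>k<n. y k$a * cnj (y k$c)) = (if a = c then complex_of_real aa + complex_of_real bb * of_nat d else 0)"
    using FY[of a c] sumW_const by simp
  then have "(\<Sum>k<n. y k$a * cnj (y k$c)) = complex_of_real (real d ^ 2) * (if a = c then complex_of_real aa + complex_of_real bb * of_nat d else 0)"
  proof -
    assume h: "complex_of_real (1 / real d ^ 2) * (\<Sum>k<n. y k$a * cnj (y k$c)) = (if a = c then complex_of_real aa + complex_of_real bb * of_nat d else 0)"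
    have "(\<Sum>k<n. y k$a * cnj (y k$c)) = (complex_of_real (real d ^ 2) * complex_of_real (1 / real d ^ 2)) * (\<Sum>k<n. y k$a * cnj (y k$c))"
      by (simp only: d2_inv mult_1)
    also have "... = complex_of_real (real d ^ 2) * (complex_of_real (1 / real d ^ 2) * (\<Sum>k<n. y k$a * cnj (y k$c)))"
      by (simp only: mult.assoc)
    finally show ?thesis unfolding h .
  qed
  also have "... = (if a = c then of_nat d else 0)"
    using aa_bb by (simp add: algebra_simps power2_eq_square)
  finally show ?thesis .
qed

lemma tight_x: "tight_frame n x"
  unfolding tight_frame_def
proof (intro exI[of _ "real d"] conjI)
  show "real d \<ge> 0" by simp
  show "(\<Sum>i<n. outer (x i)) = real d *\<^sub>R mat 1"
    unfolding vec_eq_iff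
  proof (intro allI)
    fix a c
    have "(\<Sum>i<n. outer (x i)) $ a $ c = (\<Sum>i<n. x i$a * cnj (x i$c))"
      by (simp add: sum_component outer_def)
    also have "... = (real d *\<^sub>R (mat 1 :: complex^'n^'n)) $ a $ c"
      unfolding FX' by (simp only: vector_scaleR_component) (simp add: mat_def scaleR_conv_of_real)
    finally show "(\<Sum>i<n. outer (x i)) $ a $ c = (real d *\<^sub>R (mat 1 :: complex^'n^'n)) $ a $ c" .
  qed
qed

lemma tight_y: "tight_frame n y"
  unfolding tight_frame_def
proof (intro exI[of _ "real d"] conjI)
  show "real d \<ge> 0" by simp
  show "(\<Sum>i<n. outer (y i)) = real d *\<^sub>R mat 1"
    unfolding vec_eq_iff
  proof (intro allI)
    fix a c
    have "(\<Sum>i<n. outer (y i)) $ a $ c = (\<Sum>i<n. y i$a * cnj (y i$c))"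
      by (simp add: sum_component outer_def)
    also have "... = (real d *\<^sub>R (mat 1 :: complex^'n^'n)) $ a $ c"
      unfolding FY' by (simp only: vector_scaleR_component) (simp add: mat_def scaleR_conv_of_real)
    finally show "(\<Sum>i<n. outer (y i)) $ a $ c = (real d *\<^sub>R (mat 1 :: complex^'n^'n)) $ a $ c" .
  qed
qed

end

context thm_setup begin

lemma collapse2:
  fixes F :: "'n \<Rightarrow> 'n \<Rightarrow> complex"
  shows "(\<Sum>b\<in>UNIV. \<Sum>e\<in>UNIV. F b e * (complex_of_real aa * (if a = e \<and> b = c then 1 else 0) + complex_of_real bb * (if a = c \<and> b = e then 1 else 0)))
    = complex_of_real aa * F c a + complex_of_real bb * (if a = c then (\<Sum>b\<in>UNIV. F b b) else 0)"
proof -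
  have 1: "(\<Sum>e\<in>UNIV. F b e * (complex_of_real aa * (if a = e \<and> b = c then 1 else 0) + complex_of_real bb * (if a = c \<and> b = e then 1 else 0)))
      = (\<Sum>e\<in>UNIV. (if e = a then (if b = c then complex_of_real aa * F b a else 0) else 0) + (if e = b then (if a = c then complex_of_real bb * F b b else 0) else 0))" for b
    by (intro sum.cong refl) (auto simp: algebra_simps)
  have "(\<Sum>b\<in>UNIV. \<Sum>e\<in>UNIV. F b e * (complex_of_real aa * (if a = e \<and> b = c then 1 else 0) + complex_of_real bb * (if a = c \<and> b = e then 1 else 0)))
     = (\<Sum>b\<in>UNIV. (if b = c then complex_of_real aa * F b a else 0) + (if a = c then complex_of_real bb * F b b else 0))"
    unfolding 1 by (simp add: sum.distrib)
  also have "... = complex_of_real aa * F c a + complex_of_real bb * (if a = c then (\<Sum>b\<in>UNIV. F b b) else 0)"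
    by (simp add: sum.distrib sum_distrib_left)
  finally show ?thesis .
qed

lemma contract_y:
  "(\<Sum>i<n. (W i * (\<Sum>b\<in>UNIV. \<Sum>e\<in>UNIV. F b e * (y i$b * cnj (y i$e)))) * (x i$a * cnj (x i$c)))
   = complex_of_real aa * F c a + complex_of_real bb * (if a = c then (\<Sum>b\<in>UNIV. F b b) else 0)"
proof -
  have "(\<Sum>i<n. (W i * (\<Sum>b\<in>UNIV. \<Sum>e\<in>UNIV. F b e * (y i$b * cnj (y i$e)))) * (x i$a * cnj (x i$c)))
     = (\<Sum>i<n. \<Sum>b\<in>UNIV. \<Sum>e\<in>UNIV. F b e * (W i * (x i$a * cnj (x i$c) * y i$b * cnj (y i$e))))"
    by (simp add: sum_distrib_left sum_distrib_right mult_ac)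
  also have "... = (\<Sum>b\<in>UNIV. \<Sum>e\<in>UNIV. \<Sum>i<n. F b e * (W i * (x i$a * cnj (x i$c) * y i$b * cnj (y i$e))))"
    by (subst sum.swap, rule sum.cong[OF refl], rule sum.swap)
  also have "... = (\<Sum>b\<in>UNIV. \<Sum>e\<in>UNIV. F b e * (complex_of_real aa * (if a = e \<and> b = c then 1 else 0) + complex_of_real bb * (if a = c \<and> b = e then 1 else 0)))"
    by (simp only: sum_distrib_left[symmetric] E)
  also have "... = complex_of_real aa * F c a + complex_of_real bb * (if a = c then (\<Sum>b\<in>UNIV. F b b) else 0)"
    by (rule collapse2)
  finally show ?thesis .
qed

lemma contract_x:
  "(\<Sum>i<n. (W i * (\<Sum>a\<in>UNIV. \<Sum>c\<in>UNIV. F a c * (x i$a * cnj (x i$c)))) * (y i$b * cnj (y i$e)))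
   = complex_of_real aa * F e b + complex_of_real bb * (if b = e then (\<Sum>a\<in>UNIV. F a a) else 0)"
proof -
  have "(\<Sum>i<n. (W i * (\<Sum>a\<in>UNIV. \<Sum>c\<in>UNIV. F a c * (x i$a * cnj (x i$c)))) * (y i$b * cnj (y i$e)))
     = (\<Sum>i<n. \<Sum>a\<in>UNIV. \<Sum>c\<in>UNIV. F a c * (W i * (x i$a * cnj (x i$c) * y i$b * cnj (y i$e))))"
    by (simp add: sum_distrib_left sum_distrib_right mult_ac)
  also have "... = (\<Sum>a\<in>UNIV. \<Sum>c\<in>UNIV. \<Sum>i<n. F a c * (W i * (x i$a * cnj (x i$c) * y i$b * cnj (y i$e))))"
    by (subst sum.swap, rule sum.cong[OF refl], rule sum.swap)
  also have "... = (\<Sum>a\<in>UNIV. \<Sum>c\<in>UNIV. F a c * (complex_of_real aa * (if a = e \<and> b = c then 1 else 0) + complex_of_real bb * (if a = c \<and> b = e then 1 else 0)))"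
    by (simp only: sum_distrib_left[symmetric] E)
  also have "... = complex_of_real aa * F e b + complex_of_real bb * (if b = e then (\<Sum>a\<in>UNIV. F a a) else 0)"
  proof -
    have 1: "(\<Sum>c\<in>UNIV. F a c * (complex_of_real aa * (if a = e \<and> b = c then 1 else 0) + complex_of_real bb * (if a = c \<and> b = e then 1 else 0)))
      = (\<Sum>c\<in>UNIV. (if c = b then (if a = e then complex_of_real aa * F a b else 0) else 0) + (if c = a then (if b = e then complex_of_real bb * F a a else 0) else 0))" for a
      by (intro sum.cong refl) (auto simp: algebra_simps)
    have "(\<Sum>a\<in>UNIV. \<Sum>c\<in>UNIV. F a c * (complex_of_real aa * (if a = e \<and> b = c then 1 else 0) + complex_of_real bb * (if a = c \<and> b = e then 1 else 0)))
      = (\<Sum>a\<in>UNIV. (if a = e then complex_of_real aa * F a b else 0) + (if b = e then complex_of_real bb * F a a else 0))"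
      unfolding 1 by (simp add: sum.distrib)
    also have "... = complex_of_real aa * F e b + complex_of_real bb * (if b = e then (\<Sum>a\<in>UNIV. F a a) else 0)"
      by (simp add: sum.distrib sum_distrib_left)
    finally show ?thesis .
  qed
  finally show ?thesis .
qed


lemma fin_alg:
  fixes m tr :: complex
  shows "complex_of_real aa * (complex_of_real (real d / t) * (m - (if p then complex_of_real ((1 - t) / real d) * tr else 0)))
    + complex_of_real bb * (if p then complex_of_real (real d / t) * (tr - of_nat d * (complex_of_real ((1 - t) / real d) * tr)) else 0) = m"
proof -
  have r1: "aa * (real d / t) = 1"
  proof -
    have "aa * (real d / t) = (aa * real d) / t" by simp
    also have "... = 1" using aa_d t0 by simp
    finally show ?thesis .
  qed
  have r2: "bb * (real d / t) * (1 - real d * ((1 - t) / real d)) = (1 - t) / real d"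
  proof -
    have "real d * ((1 - t) / real d) = 1 - t" using dpos by simp
    then have "bb * (real d / t) * (1 - real d * ((1 - t) / real d)) = bb * real d" using t0 by simp
    also have "bb * real d = (bb * real d ^ 2) / real d" using dpos by (simp add: power2_eq_square)
    also have "... = (1 - t) / real d" unfolding bb_d2 ..
    finally show ?thesis .
  qed
  have c1: "complex_of_real aa * complex_of_real (real d / t) = 1"
  proof -
    have "complex_of_real (aa * (real d / t)) = complex_of_real 1" using r1 by (rule arg_cong)
    then show ?thesis by (simp only: of_real_mult of_real_1)
  qed
  have c2: "complex_of_real bb * (complex_of_real (real d / t) * (tr - of_nat d * (complex_of_real ((1 - t) / real d) * tr)))
     = complex_of_real ((1 - t) / real d) * tr"
  proof -
    have "complex_of_real bb * (complex_of_real (real d / t) * (tr - of_nat d * (complex_of_real ((1 - t) / real d) * tr)))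
      = complex_of_real (bb * (real d / t) * (1 - real d * ((1 - t) / real d))) * tr"
      by (simp add: algebra_simps)
    then show ?thesis unfolding r2 .
  qed
  show ?thesis
  proof (cases p)
    case True
    let ?K = "complex_of_real ((1 - t) / real d) * tr"
    have e1: "complex_of_real aa * (complex_of_real (real d / t) * (m - ?K)) = m - ?K"
      by (simp only: mult.assoc[symmetric] c1 mult_1)
    show ?thesis unfolding if_P[OF True] e1 c2 by simp
  next
    case False
    have e1: "complex_of_real aa * (complex_of_real (real d / t) * (m - 0)) = m"
      by (simp only: mult.assoc[symmetric] c1 mult_1 diff_zero)
    show ?thesis unfolding if_not_P[OF False] e1 by simp
  qed
qed

lemma IC_x: "inf_complete n x"
  unfolding inf_complete_def
proof
  fix M :: "complex^'n^'n"
  define tr where "tr = (\<Sum>a\<in>UNIV. M$a$a)"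
  define \<kappa> where "\<kappa> = complex_of_real ((1 - t) / real d) * tr"
  define F where "F b e = complex_of_real (real d / t) * (M$e$b - (if e = b then \<kappa> else 0))" for b e
  define cf where "cf i = W i * (\<Sum>b\<in>UNIV. \<Sum>e\<in>UNIV. F b e * (y i$b * cnj (y i$e)))" for i
  have sF: "(\<Sum>b\<in>UNIV. F b b) = complex_of_real (real d / t) * (tr - of_nat d * \<kappa>)"
  proof -
    have "(\<Sum>b\<in>UNIV. F b b) = (\<Sum>b\<in>UNIV. complex_of_real (real d / t) * (M$b$b - \<kappa>))"
      by (intro sum.cong refl) (simp only: F_def if_P[OF refl])
    also have "... = complex_of_real (real d / t) * ((\<Sum>b\<in>UNIV. M$b$b) - (\<Sum>b\<in>(UNIV::'n set). \<kappa>))"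
      by (simp only: sum_distrib_left[symmetric] sum_subtractf)
    also have "... = complex_of_real (real d / t) * (tr - of_nat d * \<kappa>)"
      unfolding tr_def sum_constant card_d ..
    finally show ?thesis .
  qed
  have "M = (\<Sum>i<n. (\<chi> a b. cf i * (outer (x i))$a$b))"
    unfolding vec_eq_iff
  proof (intro allI)
    fix a c
    have "(\<Sum>i<n. (\<chi> a b. cf i * (outer (x i))$a$b)) $ a $ c = (\<Sum>i<n. cf i * (x i$a * cnj (x i$c)))"
      by (simp add: sum_component outer_def)
    also have "... = complex_of_real aa * F c a + complex_of_real bb * (if a = c then (\<Sum>b\<in>UNIV. F b b) else 0)"
      unfolding cf_def by (rule contract_y)
    also have "... = M $ a $ c"
      unfolding sF unfolding F_def \<kappa>_def using fin_alg[of "M$a$c" "a = c" tr] by (simp add: eq_commute[of c a])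
    finally show "M $ a $ c = (\<Sum>i<n. (\<chi> a b. cf i * (outer (x i))$a$b)) $ a $ c" by simp
  qed
  then show "\<exists>cf. M = (\<Sum>i<n. (\<chi> a b. cf i * (outer (x i))$a$b))" by blast
qed

lemma IC_y: "inf_complete n y"
  unfolding inf_complete_def
proof
  fix M :: "complex^'n^'n"
  define tr where "tr = (\<Sum>a\<in>UNIV. M$a$a)"
  define \<kappa> where "\<kappa> = complex_of_real ((1 - t) / real d) * tr"
  define F where "F a c = complex_of_real (real d / t) * (M$c$a - (if c = a then \<kappa> else 0))" for a c
  define cf where "cf i = W i * (\<Sum>a\<in>UNIV. \<Sum>c\<in>UNIV. F a c * (x i$a * cnj (x i$c)))" for i
  have sF: "(\<Sum>a\<in>UNIV. F a a) = complex_of_real (real d / t) * (tr - of_nat d * \<kappa>)"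
  proof -
    have "(\<Sum>a\<in>UNIV. F a a) = (\<Sum>a\<in>UNIV. complex_of_real (real d / t) * (M$a$a - \<kappa>))"
      by (intro sum.cong refl) (simp only: F_def if_P[OF refl])
    also have "... = complex_of_real (real d / t) * ((\<Sum>a\<in>UNIV. M$a$a) - (\<Sum>a\<in>(UNIV::'n set). \<kappa>))"
      by (simp only: sum_distrib_left[symmetric] sum_subtractf)
    also have "... = complex_of_real (real d / t) * (tr - of_nat d * \<kappa>)"
      unfolding tr_def sum_constant card_d ..
    finally show ?thesis .
  qed
  have "M = (\<Sum>i<n. (\<chi> a b. cf i * (outer (y i))$a$b))"
    unfolding vec_eq_iff
  proof (intro allI)
    fix b e
    have "(\<Sum>i<n. (\<chi> a b. cf i * (outer (y i))$a$b)) $ b $ e = (\<Sum>i<n. cf i * (y i$b * cnj (y i$e)))"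
      by (simp add: sum_component outer_def)
    also have "... = complex_of_real aa * F e b + complex_of_real bb * (if b = e then (\<Sum>a\<in>UNIV. F a a) else 0)"
      unfolding cf_def by (rule contract_x)
    also have "... = M $ b $ e"
      unfolding sF unfolding F_def \<kappa>_def using fin_alg[of "M$b$e" "b = e" tr] by (simp add: eq_commute[of e b])
    finally show "M $ b $ e = (\<Sum>i<n. (\<chi> a b. cf i * (outer (y i))$a$b)) $ b $ e" by simp
  qed
  then show "\<exists>cf. M = (\<Sum>i<n. (\<chi> a b. cf i * (outer (y i))$a$b))" by blast
qed

end

theorem theorem1:
  fixes t :: real and w :: "nat \<Rightarrow> real" and x y :: "nat \<Rightarrow> complex^'n"
  defines "d \<equiv> CARD('n)"
  assumes d2: "d \<ge> 2"
    and t_lo: "- 1 / (real d ^ 2 - 1) \<le> t" and t_hi: "t \<le> 1 / (real d + 1)" and t0: "t \<noteq> 0"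
    and w_nonneg: "\<forall>i<d^2. w i \<ge> 0" and w_sum: "(\<Sum>i<d^2. w i) = 1"
    and x_unit: "\<forall>i<d^2. norm (x i) = 1" and y_unit: "\<forall>i<d^2. norm (y i) = 1"
    and decomp: "(\<Sum>i<d^2. w i *\<^sub>R kron (outer (x i)) (outer (y i)))
                 = (t / real d) *\<^sub>R swap_op + ((1 - t) / real d ^ 2) *\<^sub>R mat 1"
  shows "(\<forall>i<d^2. w i = 1 / real d ^ 2)
    \<and> tight_frame (d^2) x \<and> tight_frame (d^2) y
    \<and> inf_complete (d^2) x \<and> inf_complete (d^2) y
    \<and> (\<exists>\<alpha> \<beta> :: nat \<Rightarrow> complex.
          (\<forall>i<d^2. norm (\<alpha> i) = 1 \<and> norm (\<beta> i) = 1)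
        \<and> (\<forall>i<d^2. \<forall>j<d^2. i \<noteq> j \<longrightarrow>
              (cmod (braket (\<alpha> i *s x i) (\<beta> j *s y j)))^2 = (1 - t) / real d
            \<and> braket (\<alpha> i *s x i) (\<beta> i *s y i) = complex_of_real (sqrt ((t * (real d ^ 2 - 1) + 1) / real d))
            \<and> braket (\<alpha> j *s x j) (\<alpha> i *s x i) * braket (\<beta> i *s y i) (\<beta> j *s y j) = complex_of_real t))"
proof -
  interpret S: thm_setup t w x y d "d^2" "t / real d" "(1 - t) / real d ^ 2"
    by (rule thm_setup.intro) (use d_def d2 t_lo t_hi t0 w_nonneg w_sum x_unit y_unit decomp in simp_all)
  have 1: "\<forall>i<d^2. w i = 1 / real d ^ 2" using S.w_eq by simp
  show ?thesis using 1 S.tight_x S.tight_y S.IC_x S.IC_y S.phase by blast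
qed

end
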